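(* Let $F:\mathbf{Perf}(A)\to\mathbf{Perf}(A)$ be a fully faithful $k$-linear functor satisfying: $F\circ[1]=[1]\circ F$; $F(X_i[\alpha])=X_i[\alpha]$ for all $i\ge1,\alpha\in\mathbb{Z}$; (C1) $k^i_{i[0]}=1$ for all $i\ge1$; and (C2) $k^{i-1}_{i[0]}=1$ for all $i\ge2$. Put $\lambda=k^2_{1[1]}$. Then for all $i,j\ge1$ and $\alpha\in\mathbb{Z}$ with $-j<\alpha\le\min\{0,i-j\}$ or $\max\{0,i-j\}\le\alpha<i$, one has $k^i_{j[\alpha]}=\lambda^\alpha$. In particular the action of $F$ on morphisms between indecomposable objects is completely determined by $\lambda$.
   Context: $k$ is a field, $A=k[\epsilon]/(\epsilon^2)$, $\mathbf{Perf}(A)$ the homotopy category of bounded complexes of finitely generated free $A$-modules. For $i\ge1$, $X_i$ is the complex with $A$ in degrees $-i,\dots,-1$ and differentials multiplication by $\epsilon$; $X_j[\alpha]$ is modelled as the complex with $A$ in degrees $-j-\alpha,\dots,-1-\alpha$ and differentials $\epsilon$. For $\max\{0,i-j\}\le\alpha<i$ let $1^i_{j[\alpha]}$ be the class of the chain map $X_i\to X_j[\alpha]$ that is the identity in degrees where both are nonzero and $0$ elsewhere; for $-j<\alpha\le\min\{0,i-j\}$ let $\epsilon^i_{j[\alpha]}$ be the class of the chain map that is multiplication by $\epsilon$ in degree $-1$ and $0$ elsewhere. $\mathrm{Hom}(X_i,X_j[\alpha])$ is spanned by the generator when exactly one of these exists; for $i=j$, $\alpha=0$ it has basis $\mathrm{id},\epsilon^i_{i[0]}$.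 The coefficients $k^i_{j[\alpha]}\in k$ of $F$ are defined by: $F(g)=k^i_{j[\alpha]}g$ for $g$ the generator $1^i_{j[\alpha]}$ or $\epsilon^i_{j[\alpha]}$ when $(i-j,\alpha)\ne(0,0)$, and $F(a\,\mathrm{id}+b\,\epsilon^i_{i[0]})=a\,\mathrm{id}+k^i_{i[0]}b\,\epsilon^i_{i[0]}$. *)

theory Defs
  imports Main
begin

text \<open>An element a + b eps of A is represented by the pair (a, b).\<close>

definition dadd :: "'k::field \<times> 'k \<Rightarrow> 'k \<times> 'k \<Rightarrow> 'k \<times> 'k" where
  "dadd x y = (fst x + fst y, snd x + snd y)"

definition dscale :: "'k::field \<Rightarrow> 'k \<times> 'k \<Rightarrow> 'k \<times> 'k" where
  "dscale c x = (c * fst x, c * snd x)"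

definition dsub :: "'k::field \<times> 'k \<Rightarrow> 'k \<times> 'k \<Rightarrow> 'k \<times> 'k" where
  "dsub x y = (fst x - fst y, snd x - snd y)"

text \<open>Matrices over A: entry (r, c); the size is carried by the context.\<close>
type_synonym 'k amat = "nat \<Rightarrow> nat \<Rightarrow> 'k \<times> 'k"

text \<open>Product of matrices with inner dimension p, using (a+b eps)(c+d eps) = ac + (ad+bc) eps.\<close>
definition mmul :: "nat \<Rightarrow> 'k::field amat \<Rightarrow> 'k amat \<Rightarrow> 'k amat" where
  "mmul p M N = (\<lambda>r c. ((\<Sum>s<p. fst (M r s) * fst (N s c)),
                        (\<Sum>s<p. fst (M r s) * snd (N s c) + snd (M r s) * fst (N s c))))"

text \<open>rk n is the rank of the free module in degree n; dif n is the matrix of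
  d^n : C^n \<rightarrow> C^(n+1) (size rk (n+1) x rk n), entries outside the size being 0.\<close>
record 'k cplx =
  rk :: "int \<Rightarrow> nat"
  dif :: "int \<Rightarrow> 'k amat"

definition is_perf :: "'k::field cplx \<Rightarrow> bool" where
  "is_perf C \<longleftrightarrow>
     finite {n. rk C n \<noteq> 0} \<and>
     (\<forall>n r c. (rk C (n+1) \<le> r \<or> rk C n \<le> c) \<longrightarrow> dif C n r c = (0, 0)) \<and>
     (\<forall>n r c. mmul (rk C (n+1)) (dif C (n+1)) (dif C n) r c = (0, 0))"

type_synonym 'k cmap = "int \<Rightarrow> 'k amat"

definition is_chain :: "'k::field cplx \<Rightarrow> 'k cplx \<Rightarrow> 'k cmap \<Rightarrow> bool" where
  "is_chain X Y f \<longleftrightarrow>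
     (\<forall>n r c. (rk Y n \<le> r \<or> rk X n \<le> c) \<longrightarrow> f n r c = (0, 0)) \<and>
     (\<forall>n. mmul (rk Y n) (dif Y n) (f n) = mmul (rk X (n+1)) (f (n+1)) (dif X n))"

text \<open>Chain homotopy: f - g = d h + h d, with h n : X^n \<rightarrow> Y^(n-1).\<close>
definition homotopic :: "'k::field cplx \<Rightarrow> 'k cplx \<Rightarrow> 'k cmap \<Rightarrow> 'k cmap \<Rightarrow> bool" where
  "homotopic X Y f g \<longleftrightarrow>
     (\<exists>h :: 'k cmap.
        (\<forall>n r c. (rk Y (n-1) \<le> r \<or> rk X n \<le> c) \<longrightarrow> h n r c = (0, 0)) \<and>
        (\<forall>n r c. dsub (f n r c) (g n r c) =
                 dadd (mmul (rk Y (n-1)) (dif Y (n-1)) (h n) r c)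
                      (mmul (rk X (n+1)) (h (n+1)) (dif X n) r c)))"

definition cadd :: "'k::field cmap \<Rightarrow> 'k cmap \<Rightarrow> 'k cmap" where
  "cadd f g = (\<lambda>n r c. dadd (f n r c) (g n r c))"

definition cscale :: "'k::field \<Rightarrow> 'k cmap \<Rightarrow> 'k cmap" where
  "cscale a f = (\<lambda>n r c. dscale a (f n r c))"

definition ccomp :: "'k::field cplx \<Rightarrow> 'k cmap \<Rightarrow> 'k cmap \<Rightarrow> 'k cmap" where
  "ccomp Y g f = (\<lambda>n. mmul (rk Y n) (g n) (f n))"

definition cid :: "'k::field cplx \<Rightarrow> 'k cmap" where
  "cid X = (\<lambda>n r c. if r = c \<and> r < rk X n then (1, 0) else (0, 0))"

text \<open>Shift [1]: (C[1])^n = C^(n+1), d_{C[1]}^n = d_C^(n+1).  (Sign-free model of the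
  shift, matching the paper's model of X_j[alpha] with differentials eps.)\<close>
definition shift :: "'k cplx \<Rightarrow> 'k cplx" where
  "shift C = \<lparr>rk = (\<lambda>n. rk C (n+1)), dif = (\<lambda>n. dif C (n+1))\<rparr>"

definition shiftm :: "'k cmap \<Rightarrow> 'k cmap" where
  "shiftm f = (\<lambda>n. f (n+1))"

text \<open>A functor of the homotopy category Perf(A) given by its action Fo on objects and
  Fm X Y on (representatives of) morphisms X \<rightarrow> Y, well defined on homotopy classes.\<close>
definition perf_functor ::
  "('k::field cplx \<Rightarrow> 'k cplx) \<Rightarrow> ('k cplx \<Rightarrow> 'k cplx \<Rightarrow> 'k cmap \<Rightarrow> 'k cmap) \<Rightarrow> bool" where
  "perf_functor Fo Fm \<longleftrightarrow>
     (\<forall>X. is_perf X \<longrightarrow> is_perf (Fo X)) \<and>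
     (\<forall>X Y f. is_perf X \<and> is_perf Y \<and> is_chain X Y f \<longrightarrow>
        is_chain (Fo X) (Fo Y) (Fm X Y f)) \<and>
     (\<forall>X Y f g. is_perf X \<and> is_perf Y \<and> is_chain X Y f \<and> is_chain X Y g \<and>
        homotopic X Y f g \<longrightarrow> homotopic (Fo X) (Fo Y) (Fm X Y f) (Fm X Y g)) \<and>
     (\<forall>X Y Z f g. is_perf X \<and> is_perf Y \<and> is_perf Z \<and> is_chain X Y f \<and> is_chain Y Z g \<longrightarrow>
        homotopic (Fo X) (Fo Z) (Fm X Z (ccomp Y g f)) (ccomp (Fo Y) (Fm Y Z g) (Fm X Y f))) \<and>
     (\<forall>X. is_perf X \<longrightarrow> homotopic (Fo X) (Fo X) (Fm X X (cid X)) (cid (Fo X)))"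

definition k_linear_functor ::
  "('k::field cplx \<Rightarrow> 'k cplx) \<Rightarrow> ('k cplx \<Rightarrow> 'k cplx \<Rightarrow> 'k cmap \<Rightarrow> 'k cmap) \<Rightarrow> bool" where
  "k_linear_functor Fo Fm \<longleftrightarrow> perf_functor Fo Fm \<and>
     (\<forall>X Y f g a. is_perf X \<and> is_perf Y \<and> is_chain X Y f \<and> is_chain X Y g \<longrightarrow>
        homotopic (Fo X) (Fo Y) (Fm X Y (cadd (cscale a f) g))
                                (cadd (cscale a (Fm X Y f)) (Fm X Y g)))"

definition fully_faithful ::
  "('k::field cplx \<Rightarrow> 'k cplx) \<Rightarrow> ('k cplx \<Rightarrow> 'k cplx \<Rightarrow> 'k cmap \<Rightarrow> 'k cmap) \<Rightarrow> bool" where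
  "fully_faithful Fo Fm \<longleftrightarrow>
     (\<forall>X Y. is_perf X \<and> is_perf Y \<longrightarrow>
        (\<forall>f g. is_chain X Y f \<and> is_chain X Y g \<and>
               homotopic (Fo X) (Fo Y) (Fm X Y f) (Fm X Y g) \<longrightarrow> homotopic X Y f g) \<and>
        (\<forall>g. is_chain (Fo X) (Fo Y) g \<longrightarrow>
               (\<exists>f. is_chain X Y f \<and> homotopic (Fo X) (Fo Y) (Fm X Y f) g)))"

text \<open>F \<circ> [1] = [1] \<circ> F, on objects (strictly) and on morphisms (in the homotopy category).\<close>
definition commutes_shift ::
  "('k::field cplx \<Rightarrow> 'k cplx) \<Rightarrow> ('k cplx \<Rightarrow> 'k cplx \<Rightarrow> 'k cmap \<Rightarrow> 'k cmap) \<Rightarrow> bool" where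
  "commutes_shift Fo Fm \<longleftrightarrow>
     (\<forall>X. is_perf X \<longrightarrow> Fo (shift X) = shift (Fo X)) \<and>
     (\<forall>X Y f. is_perf X \<and> is_perf Y \<and> is_chain X Y f \<longrightarrow>
        homotopic (Fo (shift X)) (Fo (shift Y)) (Fm (shift X) (shift Y) (shiftm f))
                  (shiftm (Fm X Y f)))"

text \<open>X_j[alpha]: A in degrees -j-alpha, ..., -1-alpha, differentials multiplication by eps.
  X_i is X_i[0].\<close>
definition Xsh :: "nat \<Rightarrow> int \<Rightarrow> 'k::field cplx" where
  "Xsh j \<alpha> = \<lparr>rk = (\<lambda>n. if - int j - \<alpha> \<le> n \<and> n \<le> -1 - \<alpha> then 1 else 0),
               dif = (\<lambda>n r c. if r = 0 \<and> c = 0 \<and> - int j - \<alpha> \<le> n \<and> n + 1 \<le> -1 - \<alpha>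
                              then (0, 1) else (0, 0))\<rparr>"

definition one_map :: "nat \<Rightarrow> nat \<Rightarrow> int \<Rightarrow> 'k::field cmap" where
  "one_map i j \<alpha> = (\<lambda>n r c. if r = 0 \<and> c = 0 \<and> - int i \<le> n \<and> n \<le> -1 \<and>
                               - int j - \<alpha> \<le> n \<and> n \<le> -1 - \<alpha> then (1, 0) else (0, 0))"

definition eps_map :: "nat \<Rightarrow> nat \<Rightarrow> int \<Rightarrow> 'k::field cmap" where
  "eps_map i j \<alpha> = (\<lambda>n r c. if r = 0 \<and> c = 0 \<and> n = -1 then (0, 1) else (0, 0))"

text \<open>The generator of Hom(X_i, X_j[alpha]) whose F-coefficient is k^i_{j[alpha]}:
  eps^i_{j[alpha]} when -j < alpha <= min 0 (i-j) (this includes the case i = j, alpha = 0),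
  and 1^i_{j[alpha]} otherwise.\<close>
definition gen :: "nat \<Rightarrow> nat \<Rightarrow> int \<Rightarrow> 'k::field cmap" where
  "gen i j \<alpha> = (if - int j < \<alpha> \<and> \<alpha> \<le> min 0 (int i - int j) then eps_map i j \<alpha>
                 else one_map i j \<alpha>)"

definition kcoef ::
  "('k::field cplx \<Rightarrow> 'k cplx \<Rightarrow> 'k cmap \<Rightarrow> 'k cmap) \<Rightarrow> nat \<Rightarrow> nat \<Rightarrow> int \<Rightarrow> 'k" where
  "kcoef Fm i j \<alpha> = (THE c. homotopic (Xsh i 0) (Xsh j \<alpha>)
                         (Fm (Xsh i 0) (Xsh j \<alpha>) (gen i j \<alpha>)) (cscale c (gen i j \<alpha>)))"

end

theory Submission
  imports Defs
begin


definition Rg :: "nat \<Rightarrow> int \<Rightarrow> int \<Rightarrow> bool" where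
  "Rg i a n \<longleftrightarrow> - int i - a \<le> n \<and> n \<le> -1 - a"

definition amul :: "'k::field \<times> 'k \<Rightarrow> 'k \<times> 'k \<Rightarrow> 'k \<times> 'k" where
  "amul x y = (fst x * fst y, fst x * snd y + snd x * fst y)"

lemma mmul_le1: "p \<le> 1 \<Longrightarrow> mmul p M N r c = (if p = 0 then (0,0) else amul (M r 0) (N 0 c))"
  by (cases p) (auto simp: mmul_def amul_def)

lemma rk_Xsh: "rk (Xsh j a) n = (if Rg j a n then 1 else 0)"
  by (simp add: Xsh_def Rg_def)

lemma dif_Xsh: "dif (Xsh j a) n r c = (if r = 0 \<and> c = 0 \<and> Rg j a n \<and> Rg j a (n+1) then (0,1) else (0,0))"
  by (auto simp: Xsh_def Rg_def)

lemma shift_Xsh: "shift (Xsh j a) = Xsh j (a+1)"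
  by (simp add: shift_def Xsh_def fun_eq_iff algebra_simps)

lemma is_perf_Xsh: "is_perf (Xsh j a)"
proof -
  have "{n. rk (Xsh j a) n \<noteq> 0} \<subseteq> {- int j - a .. -1 - a}" by (auto simp: rk_Xsh Rg_def split: if_splits)
  hence "finite {n. rk (Xsh j a) n \<noteq> 0}" using finite_subset by blast
  moreover have "\<forall>n r c. (rk (Xsh j a) (n+1) \<le> r \<or> rk (Xsh j a) n \<le> c) \<longrightarrow> dif (Xsh j a) n r c = (0, 0)"
    by (auto simp: rk_Xsh dif_Xsh)
  moreover have "\<forall>n r c. mmul (rk (Xsh j a) (n+1)) (dif (Xsh j a) (n+1)) (dif (Xsh j a) n) r c = (0, 0)"
    by (auto simp: mmul_le1 rk_Xsh dif_Xsh amul_def)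
  ultimately show ?thesis by (simp add: is_perf_def)
qed

definition hrel :: "nat \<Rightarrow> int \<Rightarrow> nat \<Rightarrow> int \<Rightarrow> 'k::field cmap \<Rightarrow> 'k cmap \<Rightarrow> (int \<Rightarrow> 'k) \<Rightarrow> bool" where
  "hrel i a j b f g x \<longleftrightarrow> (\<forall>n. \<not> (Rg j b (n-1) \<and> Rg i a n) \<longrightarrow> x n = 0) \<and>
     (\<forall>n r c. dsub (f n r c) (g n r c) = (if r = 0 \<and> c = 0 then
        (0, (if Rg j b (n-1) \<and> Rg j b n then x n else 0) + (if Rg i a n \<and> Rg i a (n+1) then x (n+1) else 0))
        else (0,0)))"

lemma homotopic_Xsh: fixes f g :: "'k::field cmap"
  shows "homotopic (Xsh i a :: 'k cplx) (Xsh j b :: 'k cplx) f g \<longleftrightarrow> (\<exists>x. hrel i a j b f g x)"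
proof
  assume "homotopic (Xsh i a :: 'k cplx) (Xsh j b :: 'k cplx) f g"
  then obtain h where H: "(\<forall>n r c. (rk (Xsh j b :: 'k cplx) (n-1) \<le> r \<or> rk (Xsh i a :: 'k cplx) n \<le> c) \<longrightarrow> h n r c = (0, 0)) \<and>
    (\<forall>n r c. dsub (f n r c) (g n r c) =
                 dadd (mmul (rk (Xsh j b :: 'k cplx) (n-1)) (dif (Xsh j b :: 'k cplx) (n-1)) (h n) r c)
                      (mmul (rk (Xsh i a :: 'k cplx) (n+1)) (h (n+1)) (dif (Xsh i a :: 'k cplx) n) r c))"
    unfolding homotopic_def ..
  from H have hb: "\<forall>n r c. (rk (Xsh j b :: 'k cplx) (n-1) \<le> r \<or> rk (Xsh i a :: 'k cplx) n \<le> c) \<longrightarrow> h n r c = (0, 0)" by (rule conjunct1)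
  from H have he: "\<forall>n r c. dsub (f n r c) (g n r c) =
                 dadd (mmul (rk (Xsh j b :: 'k cplx) (n-1)) (dif (Xsh j b :: 'k cplx) (n-1)) (h n) r c)
                      (mmul (rk (Xsh i a :: 'k cplx) (n+1)) (h (n+1)) (dif (Xsh i a :: 'k cplx) n) r c)" by (rule conjunct2)
  define x where "x n = fst (h n 0 0)" for n
  have hb': "h n r c = (if r = 0 \<and> c = 0 \<and> Rg j b (n-1) \<and> Rg i a n then h n 0 0 else (0,0))" for n r c
    using hb[rule_format, of n r c] by (auto simp: rk_Xsh)
  have "hrel i a j b f g x"
    unfolding hrel_def
  proof (intro conjI allI impI)
    fix n assume "\<not> (Rg j b (n - 1) \<and> Rg i a n)"
    then show "x n = 0" using hb[rule_format, of n 0 0] by (auto simp: x_def rk_Xsh)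
  next
    fix n r c
    show "dsub (f n r c) (g n r c) = (if r = 0 \<and> c = 0 then
        (0, (if Rg j b (n-1) \<and> Rg j b n then x n else 0) + (if Rg i a n \<and> Rg i a (n+1) then x (n+1) else 0))
        else (0,0))"
      unfolding he[rule_format]
      using hb[rule_format, of n 0 c] hb[rule_format, of "n+1" r 0]
      by (auto simp: mmul_le1 rk_Xsh dif_Xsh amul_def dadd_def x_def)
  qed
  then show "\<exists>x. hrel i a j b f g x" by blast
next
  assume "\<exists>x. hrel i a j b f g x"
  then obtain x where hx: "hrel i a j b f g x" by blast
  define h :: "'k cmap" where "h n r c = (if r = 0 \<and> c = 0 \<and> Rg j b (n-1) \<and> Rg i a n then (x n, 0) else (0,0))" for n r c
  have xb: "\<not> (Rg j b (n-1) \<and> Rg i a n) \<Longrightarrow> x n = 0" for n using hx by (simp add: hrel_def)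
  show "homotopic (Xsh i a :: 'k cplx) (Xsh j b :: 'k cplx) f g"
    unfolding homotopic_def
  proof (intro exI[of _ h] conjI allI impI)
    fix n r c assume "rk (Xsh j b :: 'k cplx) (n-1) \<le> r \<or> rk (Xsh i a :: 'k cplx) n \<le> c"
    then show "h n r c = (0,0)" by (auto simp: h_def rk_Xsh split: if_splits)
  next
    fix n r c
    have e: "dsub (f n r c) (g n r c) = (if r = 0 \<and> c = 0 then
        (0, (if Rg j b (n-1) \<and> Rg j b n then x n else 0) + (if Rg i a n \<and> Rg i a (n+1) then x (n+1) else 0))
        else (0,0))" using hx by (simp add: hrel_def)
    show "dsub (f n r c) (g n r c) =
                 dadd (mmul (rk (Xsh j b :: 'k cplx) (n-1)) (dif (Xsh j b :: 'k cplx) (n-1)) (h n) r c)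
                      (mmul (rk (Xsh i a :: 'k cplx) (n+1)) (h (n+1)) (dif (Xsh i a :: 'k cplx) n) r c)"
      unfolding e using xb[of n] xb[of "n+1"]
      by (auto simp: mmul_le1 rk_Xsh dif_Xsh amul_def dadd_def h_def)
  qed
qed


definition crel :: "nat \<Rightarrow> int \<Rightarrow> nat \<Rightarrow> int \<Rightarrow> 'k::field cmap \<Rightarrow> bool" where
  "crel i a j b f \<longleftrightarrow> (\<forall>n r c. (r \<noteq> 0 \<or> c \<noteq> 0 \<or> \<not> Rg j b n \<or> \<not> Rg i a n) \<longrightarrow> f n r c = (0,0)) \<and>
     (\<forall>n. (if Rg j b n \<and> Rg j b (n+1) then fst (f n 0 0) else 0) =
          (if Rg i a n \<and> Rg i a (n+1) then fst (f (n+1) 0 0) else 0))"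

lemma is_chain_Xsh: fixes f :: "'k::field cmap"
  shows "is_chain (Xsh i a :: 'k cplx) (Xsh j b) f \<longleftrightarrow> crel i a j b f"
proof
  assume H: "is_chain (Xsh i a :: 'k cplx) (Xsh j b) f"
  have b: "\<forall>n r c. (r \<noteq> 0 \<or> c \<noteq> 0 \<or> \<not> Rg j b n \<or> \<not> Rg i a n) \<longrightarrow> f n r c = (0,0)"
    using H unfolding is_chain_def by (auto simp: rk_Xsh)
  have "(if Rg j b n \<and> Rg j b (n+1) then fst (f n 0 0) else 0) =
          (if Rg i a n \<and> Rg i a (n+1) then fst (f (n+1) 0 0) else 0)" for n
  proof -
    have "mmul (rk (Xsh j b :: 'k cplx) n) (dif (Xsh j b) n) (f n) 0 0 = mmul (rk (Xsh i a :: 'k cplx) (n+1)) (f (n+1)) (dif (Xsh i a) n) 0 0"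
      using H unfolding is_chain_def by metis
    then show ?thesis by (auto simp: mmul_le1 rk_Xsh dif_Xsh amul_def split: if_splits)
  qed
  with b show "crel i a j b f" by (simp add: crel_def)
next
  assume H: "crel i a j b f"
  have b: "\<And>n r c. (r \<noteq> 0 \<or> c \<noteq> 0 \<or> \<not> Rg j b n \<or> \<not> Rg i a n) \<Longrightarrow> f n r c = (0,0)"
    using H unfolding crel_def by blast
  have e: "\<And>n. (if Rg j b n \<and> Rg j b (n+1) then fst (f n 0 0) else 0) =
          (if Rg i a n \<and> Rg i a (n+1) then fst (f (n+1) 0 0) else 0)"
    using H unfolding crel_def by blast
  show "is_chain (Xsh i a :: 'k cplx) (Xsh j b) f"
    unfolding is_chain_def
  proof (intro conjI allI impI)
    fix n r c assume "rk (Xsh j b :: 'k cplx) n \<le> r \<or> rk (Xsh i a :: 'k cplx) n \<le> c"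
    then show "f n r c = (0,0)" by (intro b) (auto simp: rk_Xsh split: if_splits)
  next
    fix n
    show "mmul (rk (Xsh j b :: 'k cplx) n) (dif (Xsh j b) n) (f n) = mmul (rk (Xsh i a :: 'k cplx) (n+1)) (f (n+1)) (dif (Xsh i a) n)"
    proof (intro ext)
      fix r c
      show "mmul (rk (Xsh j b :: 'k cplx) n) (dif (Xsh j b) n) (f n) r c = mmul (rk (Xsh i a :: 'k cplx) (n+1)) (f (n+1)) (dif (Xsh i a) n) r c"
        using e[of n] b[where n=n and r=0 and c=c] b[where n="n+1" and r=r and c=0]
        by (auto simp: mmul_le1 rk_Xsh dif_Xsh amul_def split: if_splits)
    qed
  qed
qed

lemma hrel_refl: "hrel i a j b f f (\<lambda>_. 0)"
  by (simp add: hrel_def dsub_def)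

lemma hrel_sym: assumes "hrel i a j b f g x" shows "hrel i a j b g f (\<lambda>n. - x n)"
proof -
  have "dsub (g n r c) (f n r c) = (let p = dsub (f n r c) (g n r c) in (- fst p, - snd p))" for n r c
    by (simp add: dsub_def)
  then show ?thesis using assms unfolding hrel_def by (auto simp: Let_def)
qed

lemma hrel_trans: assumes "hrel i a j b f g x" "hrel i a j b g h y" shows "hrel i a j b f h (\<lambda>n. x n + y n)"
proof -
  have "dsub (f n r c) (h n r c) = (fst (dsub (f n r c) (g n r c)) + fst (dsub (g n r c) (h n r c)),
         snd (dsub (f n r c) (g n r c)) + snd (dsub (g n r c) (h n r c)))" for n r c
    by (simp add: dsub_def)
  then show ?thesis using assms unfolding hrel_def by (auto simp: algebra_simps)
qed

lemma hrel_scale: assumes "hrel i a j b f g x" shows "hrel i a j b (cscale k f) (cscale k g) (\<lambda>n. k * x n)"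
proof -
  have "dsub (cscale k f n r c) (cscale k g n r c) = (k * fst (dsub (f n r c) (g n r c)), k * snd (dsub (f n r c) (g n r c)))" for n r c
    by (simp add: dsub_def cscale_def dscale_def algebra_simps)
  then show ?thesis using assms unfolding hrel_def by (auto simp: algebra_simps)
qed

lemma hrel_add: assumes "hrel i a j b f g x" shows "hrel i a j b (cadd f k) (cadd g k) x"
proof -
  have "dsub (cadd f k n r c) (cadd g k n r c) = dsub (f n r c) (g n r c)" for n r c
    by (simp add: dsub_def cadd_def dadd_def)
  then show ?thesis using assms unfolding hrel_def by auto
qed

lemma hrel_add2: assumes "hrel i a j b f g x" shows "hrel i a j b (cadd k f) (cadd k g) x"
proof -
  have "dsub (cadd k f n r c) (cadd k g n r c) = dsub (f n r c) (g n r c)" for n r c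
    by (simp add: dsub_def cadd_def dadd_def)
  then show ?thesis using assms unfolding hrel_def by auto
qed

abbreviation HT :: "nat \<Rightarrow> int \<Rightarrow> nat \<Rightarrow> int \<Rightarrow> 'k::field cmap \<Rightarrow> 'k cmap \<Rightarrow> bool" where
  "HT i a j b f g \<equiv> homotopic (Xsh i a :: 'k cplx) (Xsh j b) f g"

lemma ht_refl: "HT i a j b f f"
  using hrel_refl homotopic_Xsh by blast
lemma ht_sym: "HT i a j b f g \<Longrightarrow> HT i a j b g f"
  unfolding homotopic_Xsh by (metis hrel_sym)
lemma ht_trans: "HT i a j b f g \<Longrightarrow> HT i a j b g h \<Longrightarrow> HT i a j b f h"
  unfolding homotopic_Xsh by (metis hrel_trans)
lemma ht_scale: "HT i a j b f g \<Longrightarrow> HT i a j b (cscale k f) (cscale k g)"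
  unfolding homotopic_Xsh by (metis hrel_scale)
lemma ht_add: "HT i a j b f g \<Longrightarrow> HT i a j b (cadd f k) (cadd g k)"
  unfolding homotopic_Xsh by (metis hrel_add)
lemma ht_add2: "HT i a j b f g \<Longrightarrow> HT i a j b (cadd k f) (cadd k g)"
  unfolding homotopic_Xsh by (metis hrel_add2)

lemma cscale_cscale: "cscale a (cscale b f) = cscale (a*b) f"
  by (simp add: cscale_def dscale_def fun_eq_iff)
lemma cscale_one: "cscale 1 f = f"
  by (simp add: cscale_def dscale_def fun_eq_iff)

definition zmap :: "'k::field cmap" where "zmap = (\<lambda>n r c. (0,0))"

lemma cscale_zero: "cscale 0 f = zmap"
  by (simp add: cscale_def dscale_def fun_eq_iff zmap_def)
lemma cadd_zmap: "cadd f zmap = f"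
  by (simp add: cadd_def dadd_def fun_eq_iff zmap_def)
lemma cadd_neg: "cadd (cscale (-1) f) f = zmap"
  by (simp add: cadd_def dadd_def cscale_def dscale_def fun_eq_iff zmap_def)


lemma crel_bound: "crel i a j b f \<Longrightarrow> \<not> (r = 0 \<and> c = 0 \<and> Rg j b n \<and> Rg i a n) \<Longrightarrow> f n r c = (0,0)"
  unfolding crel_def by blast
lemma crel_eq: "crel i a j b f \<Longrightarrow> (if Rg j b n \<and> Rg j b (n+1) then fst (f n 0 0) else 0) =
          (if Rg i a n \<and> Rg i a (n+1) then fst (f (n+1) 0 0) else 0)"
  unfolding crel_def by blast
lemma crel_eq': "crel i a j b f \<Longrightarrow> (if Rg j b (n-1) \<and> Rg j b n then fst (f (n-1) 0 0) else 0) =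
          (if Rg i a (n-1) \<and> Rg i a n then fst (f n 0 0) else 0)"
  using crel_eq[of i a j b f "n-1"] by simp

lemma hrel_bound: "hrel i a j b f g x \<Longrightarrow> \<not> (Rg j b (n-1) \<and> Rg i a n) \<Longrightarrow> x n = 0"
  unfolding hrel_def by blast
lemma hrel_eq: "hrel i a j b f g x \<Longrightarrow> dsub (f n r c) (g n r c) = (if r = 0 \<and> c = 0 then
        (0, (if Rg j b (n-1) \<and> Rg j b n then x n else 0) + (if Rg i a n \<and> Rg i a (n+1) then x (n+1) else 0))
        else (0,0))"
  unfolding hrel_def by blast

lemma ccomp_Xsh:
  assumes "crel i a j b f" "crel j b l e g"
  shows "ccomp (Xsh j b) g f n r c = (if r = 0 \<and> c = 0 \<and> Rg j b n then amul (g n 0 0) (f n 0 0) else (0,0))"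
  using crel_bound[OF assms(1), of 0 c n] crel_bound[OF assms(2), of r 0 n]
  by (auto simp: ccomp_def mmul_le1 rk_Xsh amul_def)

lemma crel_comp:
  assumes f: "crel i a j b f" and g: "crel j b l e g"
  shows "crel i a l e (ccomp (Xsh j b) g f)"
  unfolding crel_def
proof (intro conjI allI impI)
  fix n :: int and r c :: nat assume "r \<noteq> 0 \<or> c \<noteq> 0 \<or> \<not> Rg l e n \<or> \<not> Rg i a n"
  then show "ccomp (Xsh j b) g f n r c = (0,0)"
    using crel_bound[OF f, of 0 0 n] crel_bound[OF g, of 0 0 n]
    by (auto simp: ccomp_Xsh[OF f g] amul_def)
next
  fix n
  have ef: "(if Rg j b n \<and> Rg j b (n+1) then fst (f n 0 0) else 0) =
          (if Rg i a n \<and> Rg i a (n+1) then fst (f (n+1) 0 0) else 0)" by (rule crel_eq[OF f])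
  have eg: "(if Rg l e n \<and> Rg l e (n+1) then fst (g n 0 0) else 0) =
          (if Rg j b n \<and> Rg j b (n+1) then fst (g (n+1) 0 0) else 0)" by (rule crel_eq[OF g])
  have z1: "\<not> Rg j b n \<Longrightarrow> f n 0 0 = (0,0)" using crel_bound[OF f, of 0 0 n] by auto
  have z2: "\<not> Rg j b (n+1) \<Longrightarrow> g (n+1) 0 0 = (0,0)" using crel_bound[OF g, of 0 0 "n+1"] by auto
  have z3: "\<not> Rg j b n \<Longrightarrow> g n 0 0 = (0,0)" using crel_bound[OF g, of 0 0 n] by auto
  show "(if Rg l e n \<and> Rg l e (n+1) then fst (ccomp (Xsh j b) g f n 0 0) else 0) =
          (if Rg i a n \<and> Rg i a (n+1) then fst (ccomp (Xsh j b) g f (n+1) 0 0) else 0)"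
  proof -
    have "(if Rg l e n \<and> Rg l e (n+1) then fst (ccomp (Xsh j b) g f n 0 0) else 0)
        = (if Rg l e n \<and> Rg l e (n+1) then fst (g n 0 0) else 0) * fst (f n 0 0)"
      using z1 by (auto simp: ccomp_Xsh[OF f g] amul_def)
    also have "\<dots> = fst (g (n+1) 0 0) * (if Rg j b n \<and> Rg j b (n+1) then fst (f n 0 0) else 0)"
      unfolding eg by auto
    also have "\<dots> = fst (g (n+1) 0 0) * (if Rg i a n \<and> Rg i a (n+1) then fst (f (n+1) 0 0) else 0)"
      unfolding ef ..
    also have "\<dots> = (if Rg i a n \<and> Rg i a (n+1) then fst (ccomp (Xsh j b) g f (n+1) 0 0) else 0)"
      using z2 by (auto simp: ccomp_Xsh[OF f g] amul_def)
    finally show ?thesis .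
  qed
qed

lemma hrel_comp_right:
  assumes f: "crel i a j b f" and f': "crel i a j b f'" and g: "crel j b l e g"
    and h: "hrel i a j b f f' x"
  shows "hrel i a l e (ccomp (Xsh j b) g f) (ccomp (Xsh j b) g f') (\<lambda>n. fst (g (n-1) 0 0) * x n)"
  unfolding hrel_def
proof (intro conjI allI impI)
  fix n assume "\<not> (Rg l e (n - 1) \<and> Rg i a n)"
  then show "fst (g (n - 1) 0 0) * x n = 0"
    using crel_bound[OF g, of 0 0 "n-1"] hrel_bound[OF h, of n] by auto
next
  fix n :: int and r c :: nat
  have d: "dsub (f n 0 0) (f' n 0 0) = (0, (if Rg j b (n-1) \<and> Rg j b n then x n else 0) + (if Rg i a n \<and> Rg i a (n+1) then x (n+1) else 0))"
    using hrel_eq[OF h, of n 0 0] by simp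
  have eg: "(if Rg l e (n-1) \<and> Rg l e n then fst (g (n-1) 0 0) else 0) =
          (if Rg j b (n-1) \<and> Rg j b n then fst (g n 0 0) else 0)" by (rule crel_eq'[OF g])
  have z3: "\<not> Rg j b n \<Longrightarrow> g n 0 0 = (0,0)" using crel_bound[OF g, of 0 0 n] by auto
  have xb: "\<not> (Rg j b n \<and> Rg i a (n+1)) \<Longrightarrow> x (n+1) = 0" using hrel_bound[OF h, of "n+1"] by auto
  have xb0: "\<not> (Rg j b (n-1) \<and> Rg i a n) \<Longrightarrow> x n = 0" using hrel_bound[OF h, of "n"] by auto
  obtain p q where pq: "f n 0 0 = (p, q)" by fastforce
  obtain p' q' where pq': "f' n 0 0 = (p', q')" by fastforce
  obtain u v where uv: "g n 0 0 = (u, v)" by fastforce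
  from d have pp: "p = p'" and qq: "q - q' = (if Rg j b (n-1) \<and> Rg j b n then x n else 0) + (if Rg i a n \<and> Rg i a (n+1) then x (n+1) else 0)"
    by (auto simp: dsub_def pq pq')
  show "dsub (ccomp (Xsh j b) g f n r c) (ccomp (Xsh j b) g f' n r c) = (if r = 0 \<and> c = 0 then
        (0, (if Rg l e (n-1) \<and> Rg l e n then fst (g (n-1) 0 0) * x n else 0) + (if Rg i a n \<and> Rg i a (n+1) then fst (g (n + 1 - 1) 0 0) * x (n+1) else 0))
        else (0,0))"
  proof (cases "r = 0 \<and> c = 0")
    case False then show ?thesis by (auto simp: ccomp_Xsh[OF f g] ccomp_Xsh[OF f' g] dsub_def)
  next
    case True
    have e1: "(if Rg l e (n-1) \<and> Rg l e n then fst (g (n-1) 0 0) * x n else 0) =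
              (if Rg j b (n-1) \<and> Rg j b n then u * x n else 0)"
      using eg uv by (auto split: if_splits)
    show ?thesis
    proof (cases "Rg j b n")
      case True
      then show ?thesis using \<open>r = 0 \<and> c = 0\<close> e1 qq pp
        by (auto simp: ccomp_Xsh[OF f g] ccomp_Xsh[OF f' g] dsub_def amul_def pq pq' uv algebra_simps)
    next
      case False
      then show ?thesis using \<open>r = 0 \<and> c = 0\<close> e1 xb z3 uv
        by (auto simp: ccomp_Xsh[OF f g] ccomp_Xsh[OF f' g] dsub_def)
    qed
  qed
qed


lemma hrel_comp_left:
  assumes f: "crel i a j b f" and g: "crel j b l e g" and g': "crel j b l e g'"
    and h: "hrel j b l e g g' y"
  shows "hrel i a l e (ccomp (Xsh j b) g f) (ccomp (Xsh j b) g' f) (\<lambda>n. y n * fst (f n 0 0))"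
  unfolding hrel_def
proof (intro conjI allI impI)
  fix n assume "\<not> (Rg l e (n - 1) \<and> Rg i a n)"
  then show "y n * fst (f n 0 0) = 0"
    using crel_bound[OF f, of 0 0 "n"] hrel_bound[OF h, of n] by auto
next
  fix n :: int and r c :: nat
  have d: "dsub (g n 0 0) (g' n 0 0) = (0, (if Rg l e (n-1) \<and> Rg l e n then y n else 0) + (if Rg j b n \<and> Rg j b (n+1) then y (n+1) else 0))"
    using hrel_eq[OF h, of n 0 0] by simp
  have ef: "(if Rg j b n \<and> Rg j b (n+1) then fst (f n 0 0) else 0) =
          (if Rg i a n \<and> Rg i a (n+1) then fst (f (n+1) 0 0) else 0)" by (rule crel_eq[OF f])
  have z3: "\<not> Rg j b n \<Longrightarrow> f n 0 0 = (0,0)" using crel_bound[OF f, of 0 0 n] by auto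
  obtain p q where pq: "g n 0 0 = (p, q)" by fastforce
  obtain p' q' where pq': "g' n 0 0 = (p', q')" by fastforce
  obtain u v where uv: "f n 0 0 = (u, v)" by fastforce
  from d have pp: "p = p'" and qq: "q - q' = (if Rg l e (n-1) \<and> Rg l e n then y n else 0) + (if Rg j b n \<and> Rg j b (n+1) then y (n+1) else 0)"
    by (auto simp: dsub_def pq pq')
  have e2: "(if Rg i a n \<and> Rg i a (n+1) then y (n+1) * fst (f (n+1) 0 0) else 0) =
            (if Rg j b n \<and> Rg j b (n+1) then y (n+1) * u else 0)"
  proof -
    have "(if Rg i a n \<and> Rg i a (n+1) then y (n+1) * fst (f (n+1) 0 0) else 0) =
          y (n+1) * (if Rg i a n \<and> Rg i a (n+1) then fst (f (n+1) 0 0) else 0)" by simp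
    also have "\<dots> = y (n+1) * (if Rg j b n \<and> Rg j b (n+1) then fst (f n 0 0) else 0)" unfolding ef ..
    finally show ?thesis using uv by simp
  qed
  show "dsub (ccomp (Xsh j b) g f n r c) (ccomp (Xsh j b) g' f n r c) = (if r = 0 \<and> c = 0 then
        (0, (if Rg l e (n-1) \<and> Rg l e n then y n * fst (f n 0 0) else 0) + (if Rg i a n \<and> Rg i a (n+1) then y (n+1) * fst (f (n + 1) 0 0) else 0))
        else (0,0))"
  proof (cases "r = 0 \<and> c = 0")
    case False then show ?thesis unfolding ccomp_Xsh[OF f g] ccomp_Xsh[OF f g'] by (auto simp: dsub_def)
  next
    case True
    show ?thesis
    proof (cases "Rg j b n")
      case True
      have qq': "q = q' + ((if Rg l e (n-1) \<and> Rg l e n then y n else 0) + (if Rg j b n \<and> Rg j b (n+1) then y (n+1) else 0))"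
        using qq by (simp add: algebra_simps)
      show ?thesis using \<open>r = 0 \<and> c = 0\<close> True
        unfolding ccomp_Xsh[OF f g] ccomp_Xsh[OF f g'] e2
        by (simp add: dsub_def amul_def pq pq' uv pp qq' algebra_simps)
    next
      case False
      with z3 uv have u0: "u = 0" by simp
      have e2': "(if Rg i a n \<and> Rg i a (n+1) then y (n+1) * fst (f (n+1) 0 0) else 0) = 0"
        using e2 False by simp
      show ?thesis using \<open>r = 0 \<and> c = 0\<close> False
        unfolding ccomp_Xsh[OF f g] ccomp_Xsh[OF f g'] e2' by (simp add: dsub_def uv u0)
    qed
  qed
qed

lemma ht_comp_right:
  assumes "crel i a j b f" "crel i a j b f'" "crel j b l e g" "HT i a j b f f'"
  shows "HT i a l e (ccomp (Xsh j b) g f) (ccomp (Xsh j b) g f')"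
proof -
  from assms(4) obtain x where "hrel i a j b f f' x" unfolding homotopic_Xsh by blast
  from hrel_comp_right[OF assms(1-3) this] show ?thesis unfolding homotopic_Xsh by blast
qed

lemma ht_comp_left:
  assumes "crel i a j b f" "crel j b l e g" "crel j b l e g'" "HT j b l e g g'"
  shows "HT i a l e (ccomp (Xsh j b) g f) (ccomp (Xsh j b) g' f)"
proof -
  from assms(4) obtain x where "hrel j b l e g g' x" unfolding homotopic_Xsh by blast
  from hrel_comp_left[OF assms(1-3) this] show ?thesis unfolding homotopic_Xsh by blast
qed

lemma crel_scale: "crel i a j b f \<Longrightarrow> crel i a j b (cscale k f)"
  unfolding crel_def cscale_def dscale_def
  by (auto split: if_splits)

lemma crel_zmap: "crel i a j b zmap"
  by (simp add: crel_def zmap_def)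

lemma ccomp_scale:
  assumes "crel i a j b f" "crel j b l e g"
  shows "ccomp (Xsh j b) (cscale q g) (cscale p f) = cscale (p * q) (ccomp (Xsh j b) g f)"
proof (intro ext)
  fix n :: int and r c :: nat
  show "ccomp (Xsh j b) (cscale q g) (cscale p f) n r c = cscale (p * q) (ccomp (Xsh j b) g f) n r c"
    unfolding ccomp_Xsh[OF crel_scale[OF assms(1)] crel_scale[OF assms(2)]]
    by (auto simp: cscale_def dscale_def amul_def algebra_simps ccomp_Xsh[OF assms])
qed

lemma Rg_shift: "Rg i (a+1) n = Rg i a (n+1)"
  by (auto simp: Rg_def)

lemma crel_shift: assumes "crel i a j b f" shows "crel i (a+1) j (b+1) (shiftm f)"
  unfolding crel_def shiftm_def Rg_shift
proof (intro conjI allI impI)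
  fix n :: int and r c :: nat assume "r \<noteq> 0 \<or> c \<noteq> 0 \<or> \<not> Rg j b (n+1) \<or> \<not> Rg i a (n+1)"
  then show "f (n+1) r c = (0,0)" by (intro crel_bound[OF assms]) auto
next
  fix n :: int
  show "(if Rg j b (n + 1) \<and> Rg j b (n + 1 + 1) then fst (f (n + 1) 0 0) else 0) =
         (if Rg i a (n + 1) \<and> Rg i a (n + 1 + 1) then fst (f (n + 1 + 1) 0 0) else 0)"
    using crel_eq[OF assms, of "n+1"] .
qed

lemma hrel_shift: assumes "hrel i a j b f g x" shows "hrel i (a+1) j (b+1) (shiftm f) (shiftm g) (\<lambda>n. x (n+1))"
  unfolding hrel_def shiftm_def Rg_shift
proof (intro conjI allI impI)
  fix n :: int assume "\<not> (Rg j b (n - 1 + 1) \<and> Rg i a (n + 1))"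
  then show "x (n+1) = 0" using hrel_bound[OF assms, of "n+1"] by simp
next
  fix n :: int and r c :: nat
  show "dsub (f (n + 1) r c) (g (n + 1) r c) =
         (if r = 0 \<and> c = 0
          then (0, (if Rg j b (n - 1 + 1) \<and> Rg j b (n + 1) then x (n + 1) else 0) +
                   (if Rg i a (n + 1) \<and> Rg i a (n + 1 + 1) then x (n + 1 + 1) else 0))
          else (0, 0))"
    using hrel_eq[OF assms, of "n+1" r c] by simp
qed

lemma ht_shift: assumes "HT i a j b f g" shows "HT i (a+1) j (b+1) (shiftm f) (shiftm g)"
proof -
  from assms obtain x where "hrel i a j b f g x" unfolding homotopic_Xsh by blast
  from hrel_shift[OF this] show ?thesis unfolding homotopic_Xsh by blast
qed

lemma shiftm_scale: "shiftm (cscale k f) = cscale k (shiftm f)"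
  by (simp add: shiftm_def cscale_def)


locale FS =
  fixes Fo :: "'k::field cplx \<Rightarrow> 'k cplx"
    and Fm :: "'k cplx \<Rightarrow> 'k cplx \<Rightarrow> 'k cmap \<Rightarrow> 'k cmap"
  assumes lin: "k_linear_functor Fo Fm"
    and ff: "fully_faithful Fo Fm"
    and sh: "commutes_shift Fo Fm"
    and obj: "\<forall>i \<ge> 1. \<forall>\<alpha>. Fo (Xsh i \<alpha>) = Xsh i \<alpha>"
begin

abbreviation FX :: "nat \<Rightarrow> int \<Rightarrow> nat \<Rightarrow> int \<Rightarrow> 'k cmap \<Rightarrow> 'k cmap" where
  "FX i a j b f \<equiv> Fm (Xsh i a) (Xsh j b) f"

lemma objI: "i \<ge> 1 \<Longrightarrow> Fo (Xsh i a) = Xsh i a" using obj by blast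

lemma pf: "perf_functor Fo Fm" using lin by (simp add: k_linear_functor_def)

lemma F_chain: assumes "i \<ge> 1" "j \<ge> 1" "crel i a j b f" shows "crel i a j b (FX i a j b f)"
proof -
  have "is_chain (Fo (Xsh i a)) (Fo (Xsh j b)) (FX i a j b f)"
    using pf assms(3) unfolding perf_functor_def is_chain_Xsh[symmetric] by (simp add: is_perf_Xsh)
  then show ?thesis using assms by (simp add: objI is_chain_Xsh)
qed

lemma F_resp: assumes "i \<ge> 1" "j \<ge> 1" "crel i a j b f" "crel i a j b g" "HT i a j b f g"
  shows "HT i a j b (FX i a j b f) (FX i a j b g)"
proof -
  have "homotopic (Fo (Xsh i a)) (Fo (Xsh j b)) (FX i a j b f) (FX i a j b g)"
    using pf assms(3-5) unfolding perf_functor_def is_chain_Xsh[symmetric] by (simp add: is_perf_Xsh)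
  then show ?thesis using assms by (simp add: objI)
qed

lemma F_comp: assumes "i \<ge> 1" "j \<ge> 1" "l \<ge> 1" "crel i a j b f" "crel j b l e g"
  shows "HT i a l e (FX i a l e (ccomp (Xsh j b) g f)) (ccomp (Xsh j b) (FX j b l e g) (FX i a j b f))"
proof -
  have "homotopic (Fo (Xsh i a)) (Fo (Xsh l e)) (FX i a l e (ccomp (Xsh j b) g f)) (ccomp (Fo (Xsh j b)) (FX j b l e g) (FX i a j b f))"
    using pf assms(4,5) unfolding perf_functor_def is_chain_Xsh[symmetric] by (simp add: is_perf_Xsh)
  then show ?thesis using assms by (simp add: objI)
qed

lemma F_lin: assumes "i \<ge> 1" "j \<ge> 1" "crel i a j b f" "crel i a j b g"
  shows "HT i a j b (FX i a j b (cadd (cscale c f) g)) (cadd (cscale c (FX i a j b f)) (FX i a j b g))"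
proof -
  have "homotopic (Fo (Xsh i a)) (Fo (Xsh j b)) (FX i a j b (cadd (cscale c f) g)) (cadd (cscale c (FX i a j b f)) (FX i a j b g))"
    using lin assms(3,4) unfolding k_linear_functor_def is_chain_Xsh[symmetric] by (simp add: is_perf_Xsh)
  then show ?thesis using assms by (simp add: objI)
qed

lemma F_zero: assumes "i \<ge> 1" "j \<ge> 1" shows "HT i a j b (FX i a j b zmap) zmap"
  using F_lin[OF assms crel_zmap crel_zmap, where c="-1"] by (simp add: cadd_neg)

lemma F_scale: assumes "i \<ge> 1" "j \<ge> 1" "crel i a j b f"
  shows "HT i a j b (FX i a j b (cscale c f)) (cscale c (FX i a j b f))"
proof -
  have "HT i a j b (FX i a j b (cscale c f)) (cadd (cscale c (FX i a j b f)) (FX i a j b zmap))"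
    using F_lin[OF assms crel_zmap, of c] by (simp add: cadd_zmap)
  moreover have "HT i a j b (cadd (cscale c (FX i a j b f)) (FX i a j b zmap)) (cadd (cscale c (FX i a j b f)) zmap)"
    by (rule ht_add2[OF F_zero[OF assms(1,2)]])
  ultimately show ?thesis by (simp add: cadd_zmap ht_trans)
qed

lemma F_shift: assumes "i \<ge> 1" "j \<ge> 1" "crel i a j b f"
  shows "HT i (a+1) j (b+1) (FX i (a+1) j (b+1) (shiftm f)) (shiftm (FX i a j b f))"
proof -
  have "\<forall>X Y f. is_perf X \<and> is_perf Y \<and> is_chain X Y f \<longrightarrow>
          homotopic (Fo (shift X)) (Fo (shift Y)) (Fm (shift X) (shift Y) (shiftm f)) (shiftm (Fm X Y f))"
    using sh unfolding commutes_shift_def by blast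
  then have "homotopic (Fo (shift (Xsh i a))) (Fo (shift (Xsh j b))) (Fm (shift (Xsh i a)) (shift (Xsh j b)) (shiftm f)) (shiftm (FX i a j b f))"
    using assms(3) by (simp add: is_perf_Xsh is_chain_Xsh)
  then show ?thesis using assms unfolding shift_Xsh by (simp add: objI)
qed

lemma F_faith: assumes "i \<ge> 1" "j \<ge> 1" "crel i a j b f" "crel i a j b g"
  "HT i a j b (FX i a j b f) (FX i a j b g)" shows "HT i a j b f g"
proof -
  have "homotopic (Fo (Xsh i a)) (Fo (Xsh j b)) (FX i a j b f) (FX i a j b g)" using assms by (simp add: objI)
  then show ?thesis using ff assms(3,4) unfolding fully_faithful_def is_chain_Xsh[symmetric] by (simp add: is_perf_Xsh)
qed

end


definition om :: "nat \<Rightarrow> int \<Rightarrow> nat \<Rightarrow> int \<Rightarrow> 'k::field cmap" where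
  "om i a j b = (\<lambda>n r c. if r = 0 \<and> c = 0 \<and> Rg i a n \<and> Rg j b n then (1,0) else (0,0))"

definition ep :: "'k::field cmap" where
  "ep = (\<lambda>n r c. if r = 0 \<and> c = 0 \<and> n = -1 then (0,1) else (0,0))"

lemma one_map_om: "one_map i j \<alpha> = om i 0 j \<alpha>"
  by (auto simp: one_map_def om_def Rg_def fun_eq_iff)

lemma eps_map_ep: "eps_map i j \<alpha> = ep"
  by (simp add: eps_map_def ep_def)

lemma shiftm_om: "shiftm (om i a j b) = om i (a+1) j (b+1)"
  by (simp add: shiftm_def om_def Rg_shift fun_eq_iff)

lemma crel_om: "a \<le> b \<Longrightarrow> int i + a \<le> int j + b \<Longrightarrow> crel i a j b (om i a j b)"
  unfolding crel_def om_def Rg_def by auto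

lemma crel_ep: "Rg i a (-1) \<Longrightarrow> Rg j b (-1) \<Longrightarrow> crel i a j b ep"
  unfolding crel_def ep_def by auto

lemma ccomp_om:
  assumes "a \<le> b" "int i + a \<le> int j + b" "b \<le> e" "int j + b \<le> int l + e"
    "\<And>n. Rg i a n \<Longrightarrow> Rg l e n \<Longrightarrow> Rg j b n"
  shows "ccomp (Xsh j b) (om j b l e) (om i a j b) = om i a l e"
proof (intro ext)
  fix n :: int and r c :: nat
  show "ccomp (Xsh j b) (om j b l e) (om i a j b) n r c = om i a l e n r c"
    unfolding ccomp_Xsh[OF crel_om[OF assms(1,2)] crel_om[OF assms(3,4)]]
    using assms(5)[of n] by (auto simp: om_def amul_def)
qed

lemma ccomp_om_ep:
  assumes "Rg j b (-1)" "Rg l e (-1)" "b \<le> e" "int j + b \<le> int l + e" "Rg i a (-1)"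
  shows "ccomp (Xsh j b) (om j b l e) ep = ep"
proof (intro ext)
  fix n :: int and r c :: nat
  show "ccomp (Xsh j b) (om j b l e) ep n r c = ep n r c"
    unfolding ccomp_Xsh[OF crel_ep[OF assms(5,1)] crel_om[OF assms(3,4)]]
    using assms by (auto simp: om_def ep_def amul_def)
qed

lemma ccomp_ep_om:
  assumes "Rg i a (-1)" "Rg j b (-1)" "a \<le> b" "int i + a \<le> int j + b" "Rg l e (-1)"
  shows "ccomp (Xsh j b) ep (om i a j b) = ep"
proof (intro ext)
  fix n :: int and r c :: nat
  show "ccomp (Xsh j b) ep (om i a j b) n r c = ep n r c"
    unfolding ccomp_Xsh[OF crel_om[OF assms(3,4)] crel_ep[OF assms(2,5)]]
    using assms by (auto simp: om_def ep_def amul_def)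
qed

lemma crel_ep_shift: assumes "j \<ge> 1" "int l + e \<ge> 2" "e \<le> 1"
  shows "crel j 1 l e (shiftm ep)"
proof -
  have "crel j 0 l (e-1) ep" by (rule crel_ep) (use assms in \<open>auto simp: Rg_def\<close>)
  from crel_shift[OF this] show ?thesis by simp
qed

lemma ht_ep_shift:
  assumes "j \<ge> 1" "l \<ge> 1" "int l + e \<ge> 2" "e \<le> 0"
  shows "HT (j+1) 0 l e (ccomp (Xsh j 1) (shiftm ep) (om (j+1) 0 j 1)) (cscale (-1) ep)"
proof -
  have f: "crel (j+1) 0 j 1 (om (j+1) 0 j 1)" by (rule crel_om) auto
  have g: "crel j 1 l e (shiftm ep)" by (rule crel_ep_shift) (use assms in auto)
  define x :: "int \<Rightarrow> 'a" where "x n = (if n = -1 then 1 else 0)" for n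
  have "hrel (j+1) 0 l e (ccomp (Xsh j 1) (shiftm ep) (om (j+1) 0 j 1)) (cscale (-1) ep) x"
    unfolding hrel_def
  proof (intro conjI allI impI)
    fix n :: int assume "\<not> (Rg l e (n - 1) \<and> Rg (j + 1) 0 n)"
    then show "x n = 0" using assms by (auto simp: x_def Rg_def)
  next
    fix n :: int and r c :: nat
    show "dsub (ccomp (Xsh j 1) (shiftm ep) (om (j + 1) 0 j 1) n r c) (cscale (- 1) ep n r c) =
         (if r = 0 \<and> c = 0
          then (0, (if Rg l e (n - 1) \<and> Rg l e n then x n else 0) +
                   (if Rg (j + 1) 0 n \<and> Rg (j + 1) 0 (n + 1) then x (n + 1) else 0))
          else (0, 0))"
      unfolding ccomp_Xsh[OF f g]
      using assms by (auto simp: x_def Rg_def om_def ep_def shiftm_def amul_def dsub_def cscale_def dscale_def)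
  qed
  then show ?thesis unfolding homotopic_Xsh by blast
qed


lemma ht_fst: assumes "HT i a j b f g" shows "fst (f n r c) = fst (g n r c)"
proof -
  from assms obtain x where "hrel i a j b f g x" unfolding homotopic_Xsh by blast
  from hrel_eq[OF this, of n r c] show ?thesis by (cases "r = 0 \<and> c = 0") (auto simp: dsub_def)
qed

lemma sepB: assumes "Rg i a n" "Rg j b n" "HT i a j b (cscale c (om i a j b)) (cscale c' (om i a j b))"
  shows "c = c'"
  using ht_fst[OF assms(3), of n 0 0] assms(1,2) by (simp add: cscale_def dscale_def om_def)

lemma sepA: assumes "i \<ge> 1" "j \<ge> 1" "- int j < \<alpha>" "\<alpha> \<le> 0" "\<alpha> \<le> int i - int j"
  and H: "HT i 0 j \<alpha> (cscale c ep) (cscale c' ep)"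
  shows "c = c'"
proof -
  from H obtain x where hx: "hrel i 0 j \<alpha> (cscale c ep) (cscale c' ep) x" unfolding homotopic_Xsh by blast
  define L where "L = - int j - \<alpha>"
  have L: "- int i \<le> L" "L \<le> -1" using assms unfolding L_def by auto
  have P: "L + int k \<le> -1 \<longrightarrow> x (L + int k) = 0" for k
  proof (induction k)
    case 0
    show ?case using hrel_bound[OF hx, of L] by (simp add: Rg_def L_def)
  next
    case (Suc k)
    show ?case
    proof
      assume a: "L + int (Suc k) \<le> -1"
      define n where "n = L + int k"
      have xn: "x n = 0" using Suc a by (simp add: n_def)
      have e: "dsub (cscale c ep n 0 0) (cscale c' ep n 0 0) = (0, (if Rg j \<alpha> (n-1) \<and> Rg j \<alpha> n then x n else 0) +
           (if Rg i 0 n \<and> Rg i 0 (n+1) then x (n+1) else 0))" using hrel_eq[OF hx, of n 0 0] by simp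
      have "n \<noteq> -1" "Rg i 0 n" "Rg i 0 (n+1)" using a L by (auto simp: n_def Rg_def)
      with e xn have "x (n+1) = 0" by (auto simp: cscale_def dscale_def ep_def dsub_def split: if_splits)
      moreover have "L + int (Suc k) = n + 1" by (simp add: n_def)
      ultimately show "x (L + int (Suc k)) = 0" by (simp only:)
    qed
  qed
  have "x (-1) = 0" using P[of "nat (-1 - L)"] L by simp
  moreover have "dsub (cscale c ep (-1) 0 0) (cscale c' ep (-1) 0 0) = (0, (if Rg j \<alpha> (-1-1) \<and> Rg j \<alpha> (-1) then x (-1) else 0) +
           (if Rg i 0 (-1) \<and> Rg i 0 (-1+1) then x (-1+1) else 0))" using hrel_eq[OF hx, of "-1" 0 0] by simp
  ultimately show ?thesis by (auto simp: cscale_def dscale_def ep_def dsub_def Rg_def split: if_splits)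
qed

lemma int_const:
  fixes L U n :: int
  assumes "\<And>n. L \<le> n \<Longrightarrow> n < U \<Longrightarrow> g n = g (n+1)" "L \<le> n" "n \<le> U"
  shows "g n = (g U :: 'a)"
proof -
  have "U - int k \<ge> L \<longrightarrow> g (U - int k) = g U" for k
  proof (induction k)
    case 0 then show ?case by simp
  next
    case (Suc k)
    show ?case
    proof
      assume a: "U - int (Suc k) \<ge> L"
      have "g (U - int (Suc k)) = g (U - int (Suc k) + 1)" using assms(1)[of "U - int (Suc k)"] a by simp
      also have "U - int (Suc k) + 1 = U - int k" by simp
      finally show "g (U - int (Suc k)) = g U" using Suc a by simp
    qed
  qed
  from this[of "nat (U - n)"] assms(2,3) show ?thesis by simp
qed

fun alt :: "(nat \<Rightarrow> 'k::field) \<Rightarrow> nat \<Rightarrow> 'k" where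
  "alt g 0 = 0"
| "alt g (Suc k) = g k - alt g k"


lemma nat_suc_aux: "(k::int) \<ge> 0 \<Longrightarrow> nat (k + 1) = Suc (nat k)" by simp

lemma classB1:
  assumes i: "i \<ge> 1" and j: "j \<ge> 1" and a1: "1 \<le> \<alpha>" and aij: "int i - int j \<le> \<alpha>" and ai: "\<alpha> < int i"
    and f: "crel i 0 j \<alpha> f"
  shows "HT i 0 j \<alpha> f (cscale (fst (f (-1-\<alpha>) 0 0)) (om i 0 j \<alpha>))"
proof -
  define a where "a = fst (f (-1-\<alpha>) 0 0)"
  have const: "fst (f n 0 0) = a" if "- int i \<le> n" "n \<le> -1-\<alpha>" for n
    unfolding a_def
  proof (rule int_const[where g="\<lambda>n. fst (f n 0 0)", OF _ that])
    fix m assume m: "- int i \<le> m" "m < -1 - \<alpha>"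
    have "Rg j \<alpha> m \<and> Rg j \<alpha> (m+1)" "Rg i 0 m \<and> Rg i 0 (m+1)" using m assms by (auto simp: Rg_def)
    then show "fst (f m 0 0) = fst (f (m+1) 0 0)" using crel_eq[OF f, of m] by simp
  qed
  define g where "g k = snd (f (- int i + int k) 0 0)" for k
  define x where "x n = (if - int i < n \<and> n \<le> -\<alpha> then alt g (nat (n + int i)) else 0)" for n
  have "hrel i 0 j \<alpha> f (cscale a (om i 0 j \<alpha>)) x"
    unfolding hrel_def
  proof (intro conjI allI impI)
    fix n :: int assume "\<not> (Rg j \<alpha> (n - 1) \<and> Rg i 0 n)"
    then show "x n = 0" using assms by (auto simp: x_def Rg_def)
  next
    fix n :: int and r c :: nat
    show "dsub (f n r c) (cscale a (om i 0 j \<alpha>) n r c) = (if r = 0 \<and> c = 0 then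
        (0, (if Rg j \<alpha> (n-1) \<and> Rg j \<alpha> n then x n else 0) + (if Rg i 0 n \<and> Rg i 0 (n+1) then x (n+1) else 0))
        else (0,0))"
    proof (cases "r = 0 \<and> c = 0")
      case False
      then show ?thesis using crel_bound[OF f, of r c n] by (auto simp: cscale_def dscale_def om_def dsub_def)
    next
      case rc: True
      show ?thesis
      proof (cases "- int i \<le> n \<and> n \<le> -1-\<alpha>")
        case True
        have RX: "Rg i 0 n \<and> Rg i 0 (n+1)" "Rg j \<alpha> n" using True assms by (auto simp: Rg_def)
        have nn: "nat (n + 1 + int i) = Suc (nat (n + int i))" using True by (simp add: nat_suc_aux[symmetric] algebra_simps)
        have x1: "x (n+1) = g (nat (n + int i)) - alt g (nat (n + int i))"
          using True a1 by (simp add: x_def nn)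
        have x0: "(if Rg j \<alpha> (n-1) \<and> Rg j \<alpha> n then x n else 0) = alt g (nat (n + int i))"
        proof (cases "n = - int i")
          case True then show ?thesis by (simp add: x_def)
        next
          case False
          then have "Rg j \<alpha> (n-1) \<and> Rg j \<alpha> n" using \<open>- int i \<le> n \<and> n \<le> -1-\<alpha>\<close> assms by (auto simp: Rg_def)
          then show ?thesis using False \<open>- int i \<le> n \<and> n \<le> -1-\<alpha>\<close> by (simp add: x_def)
        qed
        have gb: "g (nat (n + int i)) = snd (f n 0 0)" using True by (simp add: g_def)
        have fa: "fst (f n 0 0) = a" using const True by blast
        show ?thesis unfolding x0 using rc RX x1 gb fa
          by (cases "f n 0 0") (simp add: dsub_def cscale_def dscale_def om_def)
      next
        case False
        have f0: "f n 0 0 = (0,0)" using crel_bound[OF f, of 0 0 n] False by (auto simp: Rg_def)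
        have e1: "(if Rg j \<alpha> (n-1) \<and> Rg j \<alpha> n then x n else 0) = 0"
          using False by (auto simp: x_def Rg_def)
        have e2: "(if Rg i 0 n \<and> Rg i 0 (n+1) then x (n+1) else 0) = 0"
          using False by (auto simp: x_def Rg_def)
        show ?thesis unfolding e1 e2 using rc False f0 by (auto simp: dsub_def cscale_def dscale_def om_def Rg_def)
      qed
    qed
  qed
  then show ?thesis unfolding homotopic_Xsh a_def by blast
qed

lemma classB0:
  assumes i: "i \<ge> 1" and ij: "i < j"
    and f: "crel i 0 j 0 f"
  shows "HT i 0 j 0 f (cscale (fst (f (-1) 0 0)) (om i 0 j 0))"
proof -
  define a where "a = fst (f (-1) 0 0)"
  have const: "fst (f n 0 0) = a" if "- int i \<le> n" "n \<le> -1" for n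
    unfolding a_def
  proof (rule int_const[where g="\<lambda>n. fst (f n 0 0)", OF _ that])
    fix m assume m: "- int i \<le> m" "m < -1"
    have "Rg j 0 m \<and> Rg j 0 (m+1)" "Rg i 0 m \<and> Rg i 0 (m+1)" using m assms by (auto simp: Rg_def)
    then show "fst (f m 0 0) = fst (f (m+1) 0 0)" using crel_eq[OF f, of m] by simp
  qed
  define g where "g k = snd (f (- 1 - int k) 0 0)" for k
  define x where "x n = (if - int i \<le> n \<and> n \<le> -1 then alt g (nat (- n)) else 0)" for n
  have "hrel i 0 j 0 f (cscale a (om i 0 j 0)) x"
    unfolding hrel_def
  proof (intro conjI allI impI)
    fix n :: int assume "\<not> (Rg j 0 (n - 1) \<and> Rg i 0 n)"
    then show "x n = 0" using assms by (auto simp: x_def Rg_def)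
  next
    fix n :: int and r c :: nat
    show "dsub (f n r c) (cscale a (om i 0 j 0) n r c) = (if r = 0 \<and> c = 0 then
        (0, (if Rg j 0 (n-1) \<and> Rg j 0 n then x n else 0) + (if Rg i 0 n \<and> Rg i 0 (n+1) then x (n+1) else 0))
        else (0,0))"
    proof (cases "r = 0 \<and> c = 0")
      case False
      then show ?thesis using crel_bound[OF f, of r c n] by (auto simp: cscale_def dscale_def om_def dsub_def)
    next
      case rc: True
      show ?thesis
      proof (cases "- int i \<le> n \<and> n \<le> -1")
        case True
        have RX: "Rg i 0 n" "Rg j 0 n" "Rg j 0 (n-1)" using True assms by (auto simp: Rg_def)
        have nn: "nat (- n) = Suc (nat (- n - 1))" using True by arith
        have x0: "x n = g (nat (- n - 1)) - alt g (nat (- n - 1))"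
          using True by (simp add: x_def nn)
        have x1: "(if Rg i 0 n \<and> Rg i 0 (n+1) then x (n+1) else 0) = alt g (nat (- n - 1))"
        proof (cases "n = -1")
          case True then show ?thesis by (simp add: Rg_def)
        next
          case False
          then have "Rg i 0 n \<and> Rg i 0 (n+1)" using \<open>- int i \<le> n \<and> n \<le> -1\<close> by (auto simp: Rg_def)
          moreover have "nat (- (n+1)) = nat (- n - 1)" by simp
          ultimately show ?thesis using False \<open>- int i \<le> n \<and> n \<le> -1\<close> by (simp add: x_def)
        qed
        have gb: "g (nat (- n - 1)) = snd (f n 0 0)" using True by (simp add: g_def)
        have fa: "fst (f n 0 0) = a" using const True by blast
        show ?thesis unfolding x1 using rc RX x0 gb fa
          by (cases "f n 0 0") (simp add: dsub_def cscale_def dscale_def om_def)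
      next
        case False
        have f0: "f n 0 0 = (0,0)" using crel_bound[OF f, of 0 0 n] False by (auto simp: Rg_def)
        have e1: "(if Rg j 0 (n-1) \<and> Rg j 0 n then x n else 0) = 0"
          using False by (auto simp: x_def Rg_def)
        have e2: "(if Rg i 0 n \<and> Rg i 0 (n+1) then x (n+1) else 0) = 0"
          using False by (auto simp: x_def Rg_def)
        show ?thesis unfolding e1 e2 using rc False f0 by (auto simp: dsub_def cscale_def dscale_def om_def Rg_def)
      qed
    qed
  qed
  then show ?thesis unfolding homotopic_Xsh a_def by blast
qed

lemma classA:
  assumes i: "i \<ge> 1" and j: "j \<ge> 1" and a1: "- int j < \<alpha>" "\<alpha> \<le> 0" and aij: "\<alpha> \<le> int i - int j"
    and nd: "\<not> (\<alpha> = 0 \<and> i = j)"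
    and f: "crel i 0 j \<alpha> f"
  shows "\<exists>s. HT i 0 j \<alpha> f (cscale s ep)"
proof -
  define L where "L = - int j - \<alpha>"
  have L: "- int i \<le> L" "L \<le> -1" using assms by (auto simp: L_def)
  have const: "fst (f n 0 0) = fst (f (-1) 0 0)" if "L \<le> n" "n \<le> -1" for n
  proof (rule int_const[where g="\<lambda>n. fst (f n 0 0)", OF _ that])
    fix m assume m: "L \<le> m" "m < -1"
    have "Rg j \<alpha> m \<and> Rg j \<alpha> (m+1)" "Rg i 0 m \<and> Rg i 0 (m+1)" using m assms L by (auto simp: Rg_def L_def)
    then show "fst (f m 0 0) = fst (f (m+1) 0 0)" using crel_eq[OF f, of m] by simp
  qed
  have top0: "fst (f (-1) 0 0) = 0"
  proof (cases "\<alpha> < 0")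
    case True
    have "Rg j \<alpha> (-1) \<and> Rg j \<alpha> (-1+1)" "\<not> Rg i 0 (-1+1)" using True assms by (auto simp: Rg_def)
    then show ?thesis using crel_eq[OF f, of "-1"] by simp
  next
    case False
    then have "\<alpha> = 0" "i > j" using assms by auto
    have "\<not> Rg j \<alpha> (L-1)" "Rg i 0 (L-1) \<and> Rg i 0 (L-1+1)" using \<open>\<alpha> = 0\<close> \<open>i > j\<close> L
      by (auto simp: Rg_def L_def)
    then have "fst (f L 0 0) = 0" using crel_eq[OF f, of "L-1"] by simp
    then show ?thesis using const[of L] L by simp
  qed
  have fz: "fst (f n 0 0) = 0" if "L \<le> n" "n \<le> -1" for n using const[OF that] top0 by simp
  define g where "g k = snd (f (L + int k) 0 0)" for k
  define s where "s = snd (f (-1) 0 0) - alt g (nat (-1 - L))"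
  define x where "x n = (if L < n \<and> n \<le> -1 then alt g (nat (n - L)) else 0)" for n
  have "hrel i 0 j \<alpha> f (cscale s ep) x"
    unfolding hrel_def
  proof (intro conjI allI impI)
    fix n :: int assume "\<not> (Rg j \<alpha> (n - 1) \<and> Rg i 0 n)"
    then show "x n = 0" using assms L by (auto simp: x_def Rg_def L_def)
  next
    fix n :: int and r c :: nat
    show "dsub (f n r c) (cscale s ep n r c) = (if r = 0 \<and> c = 0 then
        (0, (if Rg j \<alpha> (n-1) \<and> Rg j \<alpha> n then x n else 0) + (if Rg i 0 n \<and> Rg i 0 (n+1) then x (n+1) else 0))
        else (0,0))"
    proof (cases "r = 0 \<and> c = 0")
      case False
      then show ?thesis using crel_bound[OF f, of r c n] by (auto simp: cscale_def dscale_def ep_def dsub_def)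
    next
      case rc: True
      show ?thesis
      proof (cases "L \<le> n \<and> n \<le> -2")
        case True
        have RX: "Rg i 0 n \<and> Rg i 0 (n+1)" "n \<noteq> -1" using True L by (auto simp: Rg_def)
        have nn: "nat (n + 1 - L) = Suc (nat (n - L))" using True by arith
        have x1: "x (n+1) = g (nat (n - L)) - alt g (nat (n - L))"
          using True by (simp add: x_def nn)
        have x0: "(if Rg j \<alpha> (n-1) \<and> Rg j \<alpha> n then x n else 0) = alt g (nat (n - L))"
        proof (cases "n = L")
          case True then show ?thesis by (simp add: x_def)
        next
          case False
          then have "Rg j \<alpha> (n-1) \<and> Rg j \<alpha> n" using \<open>L \<le> n \<and> n \<le> -2\<close> assms by (auto simp: Rg_def L_def)
          then show ?thesis using False \<open>L \<le> n \<and> n \<le> -2\<close> by (simp add: x_def)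
        qed
        have gb: "g (nat (n - L)) = snd (f n 0 0)" using True by (simp add: g_def)
        have fa: "fst (f n 0 0) = 0" using fz True by simp
        show ?thesis unfolding x0 using rc RX x1 gb fa
          by (cases "f n 0 0") (simp add: dsub_def cscale_def dscale_def ep_def)
      next
        case notmid: False
        show ?thesis
        proof (cases "n = -1")
          case True
          have e2: "(if Rg i 0 n \<and> Rg i 0 (n+1) then x (n+1) else 0) = 0" using True by (simp add: Rg_def)
          have e1: "(if Rg j \<alpha> (n-1) \<and> Rg j \<alpha> n then x n else 0) = alt g (nat (-1 - L))"
          proof (cases "L = -1")
            case True then show ?thesis using \<open>n = -1\<close> by (simp add: x_def)
          next
            case False
            then have "Rg j \<alpha> (n-1) \<and> Rg j \<alpha> n" using \<open>n = -1\<close> assms L by (auto simp: Rg_def L_def)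
            then show ?thesis using False \<open>n = -1\<close> L by (simp add: x_def)
          qed
          have fa: "fst (f n 0 0) = 0" using fz True L by simp
          show ?thesis unfolding e1 e2 using rc True fa
            by (cases "f (-1) 0 0") (simp add: dsub_def cscale_def dscale_def ep_def s_def)
        next
          case False
          have out: "n < L \<or> n > -1" using False notmid by auto
          have f0: "f n 0 0 = (0,0)" using crel_bound[OF f, of 0 0 n] out L by (auto simp: Rg_def L_def)
          have e1: "(if Rg j \<alpha> (n-1) \<and> Rg j \<alpha> n then x n else 0) = 0"
            using out by (auto simp: x_def)
          have e2: "(if Rg i 0 n \<and> Rg i 0 (n+1) then x (n+1) else 0) = 0"
            using out by (auto simp: x_def)
          show ?thesis unfolding e1 e2 using rc False f0 by (auto simp: dsub_def cscale_def dscale_def ep_def)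
        qed
      qed
    qed
  qed
  then show ?thesis unfolding homotopic_Xsh by blast
qed


definition RA :: "nat \<Rightarrow> nat \<Rightarrow> int \<Rightarrow> bool" where
  "RA i j \<alpha> \<longleftrightarrow> - int j < \<alpha> \<and> \<alpha> \<le> min 0 (int i - int j)"
definition RB :: "nat \<Rightarrow> nat \<Rightarrow> int \<Rightarrow> bool" where
  "RB i j \<alpha> \<longleftrightarrow> max 0 (int i - int j) \<le> \<alpha> \<and> \<alpha> < int i \<and> \<not> (\<alpha> = 0 \<and> i = j)"

lemma gen_A: "RA i j \<alpha> \<Longrightarrow> gen i j \<alpha> = ep"
  by (simp add: RA_def gen_def eps_map_ep)
lemma gen_B: "RB i j \<alpha> \<Longrightarrow> gen i j \<alpha> = om i 0 j \<alpha>"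
  by (auto simp: RB_def gen_def one_map_om)

lemma crel_gen_A: "i \<ge> 1 \<Longrightarrow> RA i j \<alpha> \<Longrightarrow> crel i 0 j \<alpha> (gen i j \<alpha>)"
  unfolding gen_A by (rule crel_ep) (auto simp: Rg_def RA_def)
lemma crel_gen_B: "RB i j \<alpha> \<Longrightarrow> crel i 0 j \<alpha> (gen i j \<alpha>)"
  unfolding gen_B by (rule crel_om) (auto simp: RB_def)

context FS
begin

abbreviation K :: "nat \<Rightarrow> nat \<Rightarrow> int \<Rightarrow> 'k" where "K \<equiv> kcoef Fm"

definition P :: "nat \<Rightarrow> nat \<Rightarrow> int \<Rightarrow> 'k \<Rightarrow> bool" where
  "P i j \<alpha> c \<longleftrightarrow> HT i 0 j \<alpha> (FX i 0 j \<alpha> (gen i j \<alpha>)) (cscale c (gen i j \<alpha>))"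

lemma K_unique:
  assumes sep: "\<And>c c' :: 'k. HT i 0 j \<alpha> (cscale c (gen i j \<alpha>)) (cscale c' (gen i j \<alpha>)) \<Longrightarrow> c = c'"
    and p: "P i j \<alpha> c"
  shows "K i j \<alpha> = c"
  unfolding kcoef_def
proof (rule the_equality)
  show "HT i 0 j \<alpha> (FX i 0 j \<alpha> (gen i j \<alpha>)) (cscale c (gen i j \<alpha>))" using p by (simp add: P_def)
next
  fix c' assume "HT i 0 j \<alpha> (FX i 0 j \<alpha> (gen i j \<alpha>)) (cscale c' (gen i j \<alpha>))"
  then have "HT i 0 j \<alpha> (cscale c (gen i j \<alpha>)) (cscale c' (gen i j \<alpha>))"
    using p unfolding P_def by (meson ht_sym ht_trans)
  from sep[OF this] show "c' = c" by simp
qed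

lemma K_unique_A: "i \<ge> 1 \<Longrightarrow> j \<ge> 1 \<Longrightarrow> RA i j \<alpha> \<Longrightarrow> P i j \<alpha> c \<Longrightarrow> K i j \<alpha> = c"
  by (rule K_unique, rule sepA[of i j \<alpha>]) (auto simp: RA_def gen_A)

lemma K_unique_B: "RB i j \<alpha> \<Longrightarrow> P i j \<alpha> c \<Longrightarrow> K i j \<alpha> = c"
  by (rule K_unique, rule sepB[of i 0 "-1-\<alpha>" j \<alpha>]) (auto simp: RB_def gen_B Rg_def)

lemma P_exists_A: assumes "i \<ge> 1" "j \<ge> 1" "RA i j \<alpha>" "\<not> (\<alpha> = 0 \<and> i = j)"
  shows "P i j \<alpha> (K i j \<alpha>)"
proof -
  have "crel i 0 j \<alpha> (FX i 0 j \<alpha> (gen i j \<alpha>))" by (rule F_chain) (use assms crel_gen_A in auto)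
  then obtain s where "HT i 0 j \<alpha> (FX i 0 j \<alpha> (gen i j \<alpha>)) (cscale s ep)"
    using classA[of i j \<alpha>] assms by (auto simp: RA_def)
  then have p: "P i j \<alpha> s" using assms by (simp add: P_def gen_A)
  with K_unique_A[OF assms(1-3) p] show ?thesis by simp
qed

lemma P_exists_B: assumes "i \<ge> 1" "j \<ge> 1" "RB i j \<alpha>"
  shows "P i j \<alpha> (K i j \<alpha>)"
proof -
  have c: "crel i 0 j \<alpha> (FX i 0 j \<alpha> (gen i j \<alpha>))" by (rule F_chain) (use assms crel_gen_B in auto)
  have "\<exists>s. HT i 0 j \<alpha> (FX i 0 j \<alpha> (gen i j \<alpha>)) (cscale s (om i 0 j \<alpha>))"
  proof (cases "\<alpha> = 0")
    case True
    then have "i < j" using assms by (auto simp: RB_def)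
    then show ?thesis using classB0[OF assms(1) _ c[unfolded True]] True by blast
  next
    case False
    then show ?thesis using classB1[OF assms(1,2) _ _ _ c] assms(3) by (auto simp: RB_def)
  qed
  then obtain s where "HT i 0 j \<alpha> (FX i 0 j \<alpha> (gen i j \<alpha>)) (cscale s (om i 0 j \<alpha>))" by blast
  then have p: "P i j \<alpha> s" using assms by (simp add: P_def gen_B)
  with K_unique_B[OF assms(3) p] show ?thesis by simp
qed

lemma comp_rel:
  assumes ijl: "i \<ge> 1" "j \<ge> 1" "l \<ge> 1"
    and f: "crel i a j b f" and g: "crel j b l e g" and u: "crel i a l e u" and s: "\<sigma> \<noteq> 0"
    and H: "HT i a l e (ccomp (Xsh j b) g f) (cscale \<sigma> u)"
    and Pf: "HT i a j b (FX i a j b f) (cscale p f)"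
    and Pg: "HT j b l e (FX j b l e g) (cscale q g)"
  shows "HT i a l e (FX i a l e u) (cscale (p*q) u)"
proof -
  have Ff: "crel i a j b (FX i a j b f)" by (rule F_chain[OF ijl(1,2) f])
  have Fg: "crel j b l e (FX j b l e g)" by (rule F_chain[OF ijl(2,3) g])
  have 1: "HT i a l e (FX i a l e (ccomp (Xsh j b) g f)) (FX i a l e (cscale \<sigma> u))"
    by (rule F_resp[OF ijl(1,3) crel_comp[OF f g] crel_scale[OF u] H])
  have 2: "HT i a l e (FX i a l e (cscale \<sigma> u)) (cscale \<sigma> (FX i a l e u))"
    by (rule F_scale[OF ijl(1,3) u])
  have 3: "HT i a l e (FX i a l e (ccomp (Xsh j b) g f)) (ccomp (Xsh j b) (FX j b l e g) (FX i a j b f))"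
    by (rule F_comp[OF ijl f g])
  have 4: "HT i a l e (ccomp (Xsh j b) (FX j b l e g) (FX i a j b f)) (ccomp (Xsh j b) (FX j b l e g) (cscale p f))"
    by (rule ht_comp_right[OF Ff crel_scale[OF f] Fg Pf])
  have 5: "HT i a l e (ccomp (Xsh j b) (FX j b l e g) (cscale p f)) (ccomp (Xsh j b) (cscale q g) (cscale p f))"
    by (rule ht_comp_left[OF crel_scale[OF f] Fg crel_scale[OF g] Pg])
  have 6: "ccomp (Xsh j b) (cscale q g) (cscale p f) = cscale (p*q) (ccomp (Xsh j b) g f)"
    by (rule ccomp_scale[OF f g])
  have 7: "HT i a l e (cscale (p*q) (ccomp (Xsh j b) g f)) (cscale (p*q) (cscale \<sigma> u))"
    by (rule ht_scale[OF H])
  have "HT i a l e (cscale \<sigma> (FX i a l e u)) (cscale (p*q) (cscale \<sigma> u))"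
    using 1 2 3 4 5 6 7 by (metis ht_sym ht_trans)
  then have "HT i a l e (cscale (inverse \<sigma>) (cscale \<sigma> (FX i a l e u))) (cscale (inverse \<sigma>) (cscale (p*q) (cscale \<sigma> u)))"
    by (rule ht_scale)
  then show ?thesis using s by (simp add: cscale_cscale cscale_one field_simps)
qed

lemma P_shift: assumes "j \<ge> 1" "l \<ge> 1" "crel j 0 l \<beta> g" "HT j 0 l \<beta> (FX j 0 l \<beta> g) (cscale q g)"
  shows "HT j 1 l (\<beta>+1) (FX j 1 l (\<beta>+1) (shiftm g)) (cscale q (shiftm g))"
  using ht_trans[OF F_shift[OF assms(1-3)] ht_shift[OF assms(4)]] by (simp add: shiftm_scale)

end


context FS
begin

lemma PB: "i \<ge> 1 \<Longrightarrow> j \<ge> 1 \<Longrightarrow> RB i j \<alpha> \<Longrightarrow> HT i 0 j \<alpha> (FX i 0 j \<alpha> (om i 0 j \<alpha>)) (cscale (K i j \<alpha>) (om i 0 j \<alpha>))"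
  using P_exists_B[of i j \<alpha>] by (simp add: P_def gen_B)

lemma PA: "i \<ge> 1 \<Longrightarrow> j \<ge> 1 \<Longrightarrow> RA i j \<alpha> \<Longrightarrow> \<not> (\<alpha> = 0 \<and> i = j) \<Longrightarrow> HT i 0 j \<alpha> (FX i 0 j \<alpha> ep) (cscale (K i j \<alpha>) ep)"
  using P_exists_A[of i j \<alpha>] by (simp add: P_def gen_A)

lemma R0: assumes "i \<ge> 1" "i < j" shows "K i (j+1) 0 = K i j 0 * K j (j+1) 0"
proof -
  have rb: "RB i j 0" "RB j (j+1) 0" "RB i (j+1) 0" using assms by (auto simp: RB_def)
  have c: "ccomp (Xsh j 0) (om j 0 (j+1) 0) (om i 0 j 0) = om i 0 (j+1) 0"
    by (rule ccomp_om) (use assms in \<open>auto simp: Rg_def\<close>)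
  have f: "crel i 0 j 0 (om i 0 j 0)" by (rule crel_om) (use assms in auto)
  have g: "crel j 0 (j+1) 0 (om j 0 (j+1) 0)" by (rule crel_om) auto
  have u: "crel i 0 (j+1) 0 (om i 0 (j+1) 0)" by (rule crel_om) (use assms in auto)
  have H: "HT i 0 (j+1) 0 (ccomp (Xsh j 0) (om j 0 (j+1) 0) (om i 0 j 0)) (cscale 1 (om i 0 (j+1) 0))"
    unfolding c cscale_one by (rule ht_refl)
  have "HT i 0 (j+1) 0 (FX i 0 (j+1) 0 (om i 0 (j+1) 0)) (cscale (K i j 0 * K j (j+1) 0) (om i 0 (j+1) 0))"
    by (rule comp_rel[OF _ _ _ f g u _ H PB PB]) (use assms rb in auto)
  then have "P i (j+1) 0 (K i j 0 * K j (j+1) 0)" using rb by (simp add: P_def gen_B)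
  then show ?thesis using K_unique_B rb by blast
qed

lemma R3: assumes "i \<ge> 1" shows "K (i+1) (i+1) 1 = K (i+1) (i+2) 0 * K (i+2) (i+1) 1"
proof -
  have rb: "RB (i+1) (i+2) 0" "RB (i+2) (i+1) 1" "RB (i+1) (i+1) 1" using assms by (auto simp: RB_def)
  have c: "ccomp (Xsh (i+2) 0) (om (i+2) 0 (i+1) 1) (om (i+1) 0 (i+2) 0) = om (i+1) 0 (i+1) 1"
    by (rule ccomp_om) (use assms in \<open>auto simp: Rg_def\<close>)
  have f: "crel (i+1) 0 (i+2) 0 (om (i+1) 0 (i+2) 0)" by (rule crel_om) auto
  have g: "crel (i+2) 0 (i+1) 1 (om (i+2) 0 (i+1) 1)" by (rule crel_om) auto
  have u: "crel (i+1) 0 (i+1) 1 (om (i+1) 0 (i+1) 1)" by (rule crel_om) auto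
  have H: "HT (i+1) 0 (i+1) 1 (ccomp (Xsh (i+2) 0) (om (i+2) 0 (i+1) 1) (om (i+1) 0 (i+2) 0)) (cscale 1 (om (i+1) 0 (i+1) 1))"
    unfolding c cscale_one by (rule ht_refl)
  have "HT (i+1) 0 (i+1) 1 (FX (i+1) 0 (i+1) 1 (om (i+1) 0 (i+1) 1)) (cscale (K (i+1) (i+2) 0 * K (i+2) (i+1) 1) (om (i+1) 0 (i+1) 1))"
    by (rule comp_rel[OF _ _ _ f g u _ H PB PB]) (use assms rb in auto)
  then have "P (i+1) (i+1) 1 (K (i+1) (i+2) 0 * K (i+2) (i+1) 1)" using rb by (simp add: P_def gen_B)
  then show ?thesis using K_unique_B rb by blast
qed

lemma R5: assumes "i \<ge> 1" "j \<ge> 1" "RB i j \<beta>" "\<beta> \<ge> 0"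
  shows "K (i+1) j (\<beta>+1) = K (i+1) i 1 * K i j \<beta>"
proof -
  have rb: "RB (i+1) i 1" "RB (i+1) j (\<beta>+1)" using assms by (auto simp: RB_def)
  have c: "ccomp (Xsh i 1) (om i 1 j (\<beta>+1)) (om (i+1) 0 i 1) = om (i+1) 0 j (\<beta>+1)"
    by (rule ccomp_om) (use assms in \<open>auto simp: Rg_def RB_def\<close>)
  have f: "crel (i+1) 0 i 1 (om (i+1) 0 i 1)" by (rule crel_om) auto
  have g0: "crel i 0 j \<beta> (om i 0 j \<beta>)" by (rule crel_om) (use assms in \<open>auto simp: RB_def\<close>)
  have g: "crel i 1 j (\<beta>+1) (om i 1 j (\<beta>+1))" by (rule crel_om) (use assms in \<open>auto simp: RB_def\<close>)
  have u: "crel (i+1) 0 j (\<beta>+1) (om (i+1) 0 j (\<beta>+1))" by (rule crel_om) (use assms in \<open>auto simp: RB_def\<close>)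
  have H: "HT (i+1) 0 j (\<beta>+1) (ccomp (Xsh i 1) (om i 1 j (\<beta>+1)) (om (i+1) 0 i 1)) (cscale 1 (om (i+1) 0 j (\<beta>+1)))"
    unfolding c cscale_one by (rule ht_refl)
  have Pg: "HT i 1 j (\<beta>+1) (FX i 1 j (\<beta>+1) (om i 1 j (\<beta>+1))) (cscale (K i j \<beta>) (om i 1 j (\<beta>+1)))"
    using P_shift[OF assms(1,2) g0 PB[OF assms(1,2,3)]] by (simp add: shiftm_om)
  have "HT (i+1) 0 j (\<beta>+1) (FX (i+1) 0 j (\<beta>+1) (om (i+1) 0 j (\<beta>+1))) (cscale (K (i+1) i 1 * K i j \<beta>) (om (i+1) 0 j (\<beta>+1)))"
    by (rule comp_rel[OF _ _ _ f g u _ H PB Pg]) (use assms rb in auto)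
  then have "P (i+1) j (\<beta>+1) (K (i+1) i 1 * K i j \<beta>)" using rb by (simp add: P_def gen_B)
  then show ?thesis using K_unique_B rb by blast
qed

lemma RA1: assumes "l \<ge> 1" "l \<le> i" shows "K i l 0 = K i (i+1) 0 * K (i+1) l 0"
proof -
  have ra: "RA (i+1) l 0" "RA i l 0" using assms by (auto simp: RA_def)
  have rb: "RB i (i+1) 0" using assms by (auto simp: RB_def)
  have c: "ccomp (Xsh (i+1) 0) ep (om i 0 (i+1) 0) = ep"
    by (rule ccomp_ep_om) (use assms in \<open>auto simp: Rg_def\<close>)
  have f: "crel i 0 (i+1) 0 (om i 0 (i+1) 0)" by (rule crel_om) auto
  have g: "crel (i+1) 0 l 0 ep" by (rule crel_ep) (use assms in \<open>auto simp: Rg_def\<close>)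
  have u: "crel i 0 l 0 ep" by (rule crel_ep) (use assms in \<open>auto simp: Rg_def\<close>)
  have H: "HT i 0 l 0 (ccomp (Xsh (i+1) 0) ep (om i 0 (i+1) 0)) (cscale 1 ep)"
    unfolding c cscale_one by (rule ht_refl)
  have "HT i 0 l 0 (FX i 0 l 0 ep) (cscale (K i (i+1) 0 * K (i+1) l 0) ep)"
    by (rule comp_rel[OF _ _ _ f g u _ H PB PA]) (use assms ra rb in auto)
  then have "P i l 0 (K i (i+1) 0 * K (i+1) l 0)" using ra by (simp add: P_def gen_A)
  then show ?thesis using K_unique_A ra assms by auto
qed

lemma RA2: assumes "j \<ge> 1" "l \<ge> 1" "\<beta> < 0" "- int l < \<beta>" "\<beta> \<le> int j - int l"
  shows "K (j+1) l (\<beta>+1) = K (j+1) j 1 * K j l \<beta>"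
proof -
  have ra: "RA j l \<beta>" "RA (j+1) l (\<beta>+1)" using assms by (auto simp: RA_def)
  have rb: "RB (j+1) j 1" using assms by (auto simp: RB_def)
  have f: "crel (j+1) 0 j 1 (om (j+1) 0 j 1)" by (rule crel_om) auto
  have g0: "crel j 0 l \<beta> ep" by (rule crel_ep) (use assms in \<open>auto simp: Rg_def\<close>)
  have g: "crel j 1 l (\<beta>+1) (shiftm ep)" by (rule crel_ep_shift) (use assms in auto)
  have u: "crel (j+1) 0 l (\<beta>+1) ep" by (rule crel_ep) (use assms in \<open>auto simp: Rg_def\<close>)
  have H: "HT (j+1) 0 l (\<beta>+1) (ccomp (Xsh j 1) (shiftm ep) (om (j+1) 0 j 1)) (cscale (-1) ep)"
    by (rule ht_ep_shift) (use assms in auto)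
  have Pg: "HT j 1 l (\<beta>+1) (FX j 1 l (\<beta>+1) (shiftm ep)) (cscale (K j l \<beta>) (shiftm ep))"
    by (rule P_shift[OF assms(1,2) g0 PA]) (use assms ra in auto)
  have "HT (j+1) 0 l (\<beta>+1) (FX (j+1) 0 l (\<beta>+1) ep) (cscale (K (j+1) j 1 * K j l \<beta>) ep)"
    by (rule comp_rel[OF _ _ _ f g u _ H PB Pg]) (use assms rb in auto)
  then have "P (j+1) l (\<beta>+1) (K (j+1) j 1 * K j l \<beta>)" using ra by (simp add: P_def gen_A)
  then show ?thesis using K_unique_A ra assms by auto
qed

lemma lam_nz: "K 2 1 1 \<noteq> 0"
proof
  assume z: "K 2 1 1 = 0"
  have rb: "RB 2 1 1" by (auto simp: RB_def)
  have c: "crel 2 0 1 1 (om 2 0 1 1 :: 'k cmap)" by (rule crel_om) auto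
  have "HT 2 0 1 1 (FX 2 0 1 1 (om 2 0 1 1)) zmap"
    using PB[of 2 1 1] rb z by (simp add: cscale_zero)
  moreover have "HT 2 0 1 1 zmap (FX 2 0 1 1 zmap)" by (rule ht_sym[OF F_zero]) auto
  ultimately have "HT 2 0 1 1 (FX 2 0 1 1 (om 2 0 1 1)) (FX 2 0 1 1 zmap)" by (rule ht_trans)
  then have "HT 2 0 1 1 (om 2 0 1 1 :: 'k cmap) zmap" using F_faith[OF _ _ c crel_zmap] by auto
  from ht_fst[OF this, of "-2" 0 0] show False by (simp add: om_def zmap_def Rg_def)
qed

end


locale FS2 = FS Fo Fm for Fo :: "'k::field cplx \<Rightarrow> 'k cplx" and Fm +
  assumes C1: "\<forall>i \<ge> 1. kcoef Fm i i 0 = 1"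
    and C2: "\<forall>i \<ge> 2. kcoef Fm (i - 1) i 0 = 1"
begin

lemma C2': "i \<ge> 1 \<Longrightarrow> K i (i+1) 0 = 1"
  using C2[rule_format, of "i+1"] by simp

lemma B0: assumes "i \<ge> 1" "i < j" shows "K i j 0 = 1"
  using assms(2)
proof (induction j)
  case 0 then show ?case by simp
next
  case (Suc j)
  show ?case
  proof (cases "i = j")
    case True then show ?thesis using C2' assms(1) by simp
  next
    case False
    then have "i < j" using Suc by simp
    then show ?thesis using R0[OF assms(1) \<open>i < j\<close>] Suc C2'[of j] assms(1) by simp
  qed
qed

lemma B1: "i \<ge> 1 \<Longrightarrow> K (i+1) i 1 = K 2 1 1"
proof (induction i rule: dec_induct[where i=1])
  case base then show ?case by (simp add: numeral_2_eq_2)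
next
  case (step i)
  have "K (i+1) (i+1) 1 = K (i+1) i 1 * K i (i+1) 0"
    using R5[of i "i+1" 0] step by (auto simp: RB_def)
  also have "\<dots> = K 2 1 1" using step C2' by simp
  finally have a: "K (i+1) (i+1) 1 = K 2 1 1" .
  have "K (i+1) (i+1) 1 = K (i+1) (i+2) 0 * K (i+2) (i+1) 1" by (rule R3) (use step in auto)
  also have "\<dots> = K (i+2) (i+1) 1" using C2'[of "i+1"] by simp
  finally show ?case using a by (simp add: add.commute)
qed

lemma Bmain: "\<forall>i j. i \<ge> 1 \<and> j \<ge> 1 \<and> RB i j (int m + 1) \<longrightarrow> K i j (int m + 1) = K 2 1 1 ^ (m+1)"
proof (induction m)
  case 0
  show ?case
  proof (intro allI impI)
    fix i j assume h: "i \<ge> 1 \<and> j \<ge> 1 \<and> RB i j (int 0 + 1)"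
    then have "i \<ge> 2" by (auto simp: RB_def)
    define i' where "i' = i - 1"
    have i': "i = i' + 1" "i' \<ge> 1" using \<open>i \<ge> 2\<close> by (auto simp: i'_def)
    show "K i j (int 0 + 1) = K 2 1 1 ^ (0+1)"
    proof (cases "j = i'")
      case True then show ?thesis using B1[OF i'(2)] i' by simp
    next
      case False
      then have "i' < j" using h i' by (auto simp: RB_def)
      have rb: "RB i' j 0" using \<open>i' < j\<close> i' by (auto simp: RB_def)
      have "K (i'+1) j (0+1) = K (i'+1) i' 1 * K i' j 0" by (rule R5) (use rb i' h in auto)
      then show ?thesis using B1[OF i'(2)] B0[OF i'(2) \<open>i' < j\<close>] i' by simp
    qed
  qed
next
  case (Suc m)
  show ?case
  proof (intro allI impI)
    fix i j assume h: "i \<ge> 1 \<and> j \<ge> 1 \<and> RB i j (int (Suc m) + 1)"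
    then have "i \<ge> 2" by (auto simp: RB_def)
    define i' where "i' = i - 1"
    have i': "i = i' + 1" "i' \<ge> 1" using \<open>i \<ge> 2\<close> by (auto simp: i'_def)
    have rb: "RB i' j (int m + 1)" using h i' by (auto simp: RB_def)
    have "K (i'+1) j ((int m + 1) + 1) = K (i'+1) i' 1 * K i' j (int m + 1)"
      by (rule R5) (use rb i' h in auto)
    then show "K i j (int (Suc m) + 1) = K 2 1 1 ^ (Suc m + 1)"
      using Suc.IH rb i' h B1[OF i'(2)] by (simp add: algebra_simps)
  qed
qed

lemma A0: assumes "l \<ge> 1" "l \<le> i" shows "K i l 0 = 1"
  using assms(2)
proof (induction i rule: dec_induct)
  case base then show ?case using C1 assms(1) by simp
next
  case (step i)
  have "K i l 0 = K i (i+1) 0 * K (i+1) l 0" by (rule RA1) (use assms step in auto)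
  then show ?case using step C2'[of i] assms(1) by simp
qed

lemma Amain: "\<forall>j l. j \<ge> 1 \<and> l \<ge> 1 \<and> RA j l (- int m - 1) \<longrightarrow> K j l (- int m - 1) = inverse (K 2 1 1) ^ (m+1)"
proof (induction m)
  case 0
  show ?case
  proof (intro allI impI)
    fix j l assume h: "j \<ge> 1 \<and> l \<ge> 1 \<and> RA j l (- int 0 - 1)"
    define \<beta> :: int where "\<beta> = - int 0 - 1"
    have r: "K (j+1) l (\<beta>+1) = K (j+1) j 1 * K j l \<beta>" by (rule RA2) (use h in \<open>auto simp: RA_def \<beta>_def\<close>)
    have E: "\<beta> + 1 = 0" by (simp add: \<beta>_def)
    have k0: "K (j+1) l 0 = 1" by (rule A0) (use h in \<open>auto simp: RA_def\<close>)
    have b1: "K (j+1) j 1 = K 2 1 1" using B1 h by simp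
    have eq: "K 2 1 1 * K j l \<beta> = 1" using r unfolding E k0 b1 by simp
    have "K j l \<beta> = inverse (K 2 1 1) * (K 2 1 1 * K j l \<beta>)" using lam_nz by simp
    also have "\<dots> = inverse (K 2 1 1) ^ (0+1)" unfolding eq by simp
    finally show "K j l (- int 0 - 1) = inverse (K 2 1 1) ^ (0+1)" unfolding \<beta>_def .
  qed
next
  case (Suc m)
  show ?case
  proof (intro allI impI)
    fix j l assume h: "j \<ge> 1 \<and> l \<ge> 1 \<and> RA j l (- int (Suc m) - 1)"
    define \<beta> :: int where "\<beta> = - int (Suc m) - 1"
    have r: "K (j+1) l (\<beta>+1) = K (j+1) j 1 * K j l \<beta>" by (rule RA2) (use h in \<open>auto simp: RA_def \<beta>_def\<close>)
    have E: "\<beta> + 1 = - int m - 1" by (simp add: \<beta>_def)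
    have ih: "K (j+1) l (- int m - 1) = inverse (K 2 1 1) ^ (m+1)"
      using Suc.IH h by (auto simp: RA_def)
    have b1: "K (j+1) j 1 = K 2 1 1" using B1 h by simp
    have eq: "K 2 1 1 * K j l \<beta> = inverse (K 2 1 1) ^ (m+1)" using r unfolding E ih b1 by simp
    have "K j l \<beta> = inverse (K 2 1 1) * (K 2 1 1 * K j l \<beta>)" using lam_nz by simp
    also have "\<dots> = inverse (K 2 1 1) ^ (Suc m + 1)" unfolding eq by simp
    finally show "K j l (- int (Suc m) - 1) = inverse (K 2 1 1) ^ (Suc m + 1)" unfolding \<beta>_def .
  qed
qed

lemma main:
  assumes "i \<ge> 1" "j \<ge> 1"
    "(- int j < \<alpha> \<and> \<alpha> \<le> min 0 (int i - int j)) \<or> (max 0 (int i - int j) \<le> \<alpha> \<and> \<alpha> < int i)"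
  shows "K i j \<alpha> = K 2 1 1 powi \<alpha>"
proof (cases "\<alpha> < 0")
  case True
  define m where "m = nat (- \<alpha> - 1)"
  have m: "\<alpha> = - int m - 1" using True by (simp add: m_def)
  have "RA i j \<alpha>" using assms True by (auto simp: RA_def)
  then have "K i j \<alpha> = inverse (K 2 1 1) ^ (m+1)" using Amain[of m] assms m by blast
  moreover have "K 2 1 1 powi \<alpha> = inverse (K 2 1 1) ^ (m+1)"
  proof -
    have a: "\<alpha> = - int (m+1)" using m by simp
    show ?thesis unfolding a power_int_minus power_int_of_nat by (simp add: power_inverse)
  qed
  ultimately show ?thesis by simp
next
  case False
  show ?thesis
  proof (cases "\<alpha> = 0")
    case True
    show ?thesis
    proof (cases "i = j")
      case True then show ?thesis using C1 assms \<open>\<alpha> = 0\<close> by simp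
    next
      case False
      then show ?thesis
      proof (cases "i < j")
        case True then show ?thesis using B0 assms \<open>\<alpha> = 0\<close> by simp
      next
        case False
        then show ?thesis using A0[of j i] assms \<open>\<alpha> = 0\<close> by simp
      qed
    qed
  next
    case False
    define m where "m = nat (\<alpha> - 1)"
    have m: "\<alpha> = int m + 1" using False \<open>\<not> \<alpha> < 0\<close> by (simp add: m_def)
    have "RB i j \<alpha>" using assms \<open>\<not> \<alpha> < 0\<close> False by (auto simp: RB_def)
    then have "K i j \<alpha> = K 2 1 1 ^ (m+1)" using Bmain[of m] assms m by blast
    moreover have "K 2 1 1 powi \<alpha> = K 2 1 1 ^ (m+1)"
    proof -
      have a: "\<alpha> = int (m+1)" using m by simp
      show ?thesis unfolding a power_int_of_nat ..
    qed
    ultimately show ?thesis by simp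
  qed
qed

end



theorem theorem5p10:
  fixes Fo :: "'k::field cplx \<Rightarrow> 'k cplx"
    and Fm :: "'k cplx \<Rightarrow> 'k cplx \<Rightarrow> 'k cmap \<Rightarrow> 'k cmap"
  assumes lin: "k_linear_functor Fo Fm"
    and ff: "fully_faithful Fo Fm"
    and sh: "commutes_shift Fo Fm"
    and obj: "\<forall>i \<ge> 1. \<forall>\<alpha>. Fo (Xsh i \<alpha>) = Xsh i \<alpha>"
    and C1: "\<forall>i \<ge> 1. kcoef Fm i i 0 = 1"
    and C2: "\<forall>i \<ge> 2. kcoef Fm (i - 1) i 0 = 1"
  shows "\<forall>i j \<alpha>. i \<ge> 1 \<and> j \<ge> 1 \<and>
            ((- int j < \<alpha> \<and> \<alpha> \<le> min 0 (int i - int j)) \<or>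
             (max 0 (int i - int j) \<le> \<alpha> \<and> \<alpha> < int i)) \<longrightarrow>
            kcoef Fm i j \<alpha> = (kcoef Fm 2 1 1) powi \<alpha>"
proof -
  interpret FS2 Fo Fm by unfold_locales (use lin ff sh obj C1 C2 in auto)
  show ?thesis using main by blast
qed

end
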